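(* (Stride Lemma) Let $f,g\in\breve{\mathcal D}$ satisfy $g\lhd f$ and $\sigma(g)>0$. Then $f(\sigma(f)x)\le g(\sigma(g)x)$ for all $x\in[0,\frac1{\sigma(f)}]$ (i.e. $f_{[\sigma(f)]}\le g_{[\sigma(g)]}$), and $\sigma(g)\int f<\sigma(f)\int g$.
   Context: $\int f:=\int_0^1f(x)\,dx$. $\breve{\mathcal D}$: the set of continuous, convex, strictly decreasing $f\colon[0,1]\to[0,1]$ with $f(0)=1$, $f(1)=0$. Stride: $\sigma(g):=\sup\{\alpha\ge0:\ \alpha-x\le\alpha g(x)\ \forall x\in[0,1]\}\in[0,1]$. For $f$ and $a>0$, $f_{[a]}(x):=f(ax)$ on $[0,\frac1a]$; for $b>0$, $f_{[a]}-bg$ is considered on $[0,\min\{1,\frac1a\}]$. Sign switches: for continuous $\Delta\colon[c_0,d_0]\to\mathbb R$, a closed subinterval $[c,d]$ with $c_0<c\le d<d_0$ and $\Delta([c,d])=\{0\}$ is a sign switch if there is $\delta\in(0,\min\{c-c_0,d_0-d\}]$ with $\Delta(c-x)\Delta(d+x)<0$ for all $x\in(0,\delta]$; $\chi\Delta$ is their number. Crossing number $\chi(f,g):=\sup\{\chi(f_{[a]}-bg):a,b>0\}$. Domination $g\lhd f$: $\chi(f,g)=2$ and $g\le f$ pointwise. *)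

theory Defs
  imports "HOL-Analysis.Analysis" "HOL-Library.Extended_Nat"
begin

definition Dbreve :: "(real \<Rightarrow> real) set" where
  "Dbreve = {f. continuous_on {0..1} f \<and> convex_on {0..1} f
      \<and> (\<forall>x\<in>{0..1}. \<forall>y\<in>{0..1}. x < y \<longrightarrow> f y < f x)
      \<and> f ` {0..1} \<subseteq> {0..1} \<and> f 0 = 1 \<and> f 1 = 0}"

definition stride :: "(real \<Rightarrow> real) \<Rightarrow> real" where
  "stride g = Sup {\<alpha>. \<alpha> \<ge> 0 \<and> (\<forall>x\<in>{0..1}. \<alpha> - x \<le> \<alpha> * g x)}"

definition sign_switches :: "(real \<Rightarrow> real) \<Rightarrow> real \<Rightarrow> real \<Rightarrow> (real \<times> real) set" where
  "sign_switches \<Delta> c0 d0 = {(c, d). c0 < c \<and> c \<le> d \<and> d < d0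
      \<and> \<Delta> ` {c..d} = {0}
      \<and> (\<exists>\<delta>. 0 < \<delta> \<and> \<delta> \<le> min (c - c0) (d0 - d)
              \<and> (\<forall>x\<in>{0<..\<delta>}. \<Delta> (c - x) * \<Delta> (d + x) < 0))}"

definition num_sign_switches :: "(real \<Rightarrow> real) \<Rightarrow> real \<Rightarrow> real \<Rightarrow> enat" where
  "num_sign_switches \<Delta> c0 d0 =
     (if finite (sign_switches \<Delta> c0 d0) then enat (card (sign_switches \<Delta> c0 d0)) else \<infinity>)"

definition crossing_number :: "(real \<Rightarrow> real) \<Rightarrow> (real \<Rightarrow> real) \<Rightarrow> enat" where
  "crossing_number f g = (SUP a\<in>{0<..}. SUP b\<in>{0<..}.
       num_sign_switches (\<lambda>x. f (a * x) - b * g x) 0 (min 1 (1 / a)))"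

definition dominated :: "(real \<Rightarrow> real) \<Rightarrow> (real \<Rightarrow> real) \<Rightarrow> bool" where
  "dominated g f \<longleftrightarrow> crossing_number f g = 2 \<and> (\<forall>x\<in>{0..1}. g x \<le> f x)"

end

theory Submission
  imports Defs
begin
definition rflat :: "(real \<Rightarrow> real) \<Rightarrow> real \<Rightarrow> bool" where
  "rflat H z \<longleftrightarrow> (\<forall>e>0. \<exists>d>0. \<forall>w. z < w \<and> w < z + d \<longrightarrow> \<bar>H w - H z\<bar> \<le> e * (w - z))"

lemma sard_right:
  fixes H :: "real \<Rightarrow> real"
  assumes S: "S \<subseteq> {p..q}" and fl: "\<And>z. z \<in> S \<Longrightarrow> rflat H z"
  shows "negligible (H ` S)"
  unfolding negligible_outer_le
proof (intro allI impI)
  fix e :: real assume "e > 0"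
  define L where "L = \<bar>q - p\<bar> + 2"
  define \<epsilon> where "\<epsilon> = e / (2*L)"
  have "L > 0" unfolding L_def by simp
  have "\<epsilon> > 0" unfolding \<epsilon>_def using \<open>e>0\<close> \<open>L>0\<close> by simp
  define Sn where "Sn n = {z\<in>S. \<forall>w. z < w \<and> w < z + 1/Suc n \<longrightarrow> \<bar>H w - H z\<bar> \<le> \<epsilon> * (w - z)}" for n :: nat
  define J where "J n k = {p + real k / Suc n ..< p + (real k + 1) / Suc n}" for n k :: nat
  define N where "N n = nat \<lceil>\<bar>q - p\<bar> * Suc n\<rceil> + 1" for n :: nat
  define ctr where "ctr n k = H (SOME z. z \<in> Sn n \<inter> J n k)" for n k
  define I where "I n = {k. k < N n \<and> Sn n \<inter> J n k \<noteq> {}}" for n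
  define C where "C n = (\<Union>k\<in>I n. cball (ctr n k) (\<epsilon> / Suc n))" for n
  define Dn where "Dn n = (\<Inter>m\<in>{n..}. C m)" for n
  have finI: "finite (I n)" for n unfolding I_def by auto
  have cardI: "card (I n) \<le> N n" for n
  proof -
    have "I n \<subseteq> {..<N n}" unfolding I_def by auto
    then show ?thesis by (metis card_lessThan card_mono finite_lessThan)
  qed
  have HC: "H ` Sn n \<subseteq> C n" for n
  proof
    fix y assume "y \<in> H ` Sn n"
    then obtain z where z: "z \<in> Sn n" "y = H z" by auto
    have zS: "z \<in> S" using z unfolding Sn_def by auto
    then have pz: "p \<le> z" "z \<le> q" using S by auto
    define t where "t = (z - p) * Suc n"
    have t0: "t \<ge> 0" unfolding t_def using pz by simp
    define k where "k = nat \<lfloor>t\<rfloor>"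
    have rk: "real k = of_int \<lfloor>t\<rfloor>" unfolding k_def using t0 by simp
    have kt: "real k \<le> t" "t < real k + 1" using rk by linarith+
    have zJ: "z \<in> J n k"
    proof -
      have "real k / Suc n \<le> z - p" using kt(1) unfolding t_def by (simp add: divide_simps)
      moreover have "z - p < (real k + 1) / Suc n" using kt(2) unfolding t_def by (simp add: divide_simps)
      ultimately show ?thesis unfolding J_def by auto
    qed
    have "t \<le> \<bar>q - p\<bar> * Suc n" unfolding t_def using pz by (intro mult_right_mono) auto
    then have "real k \<le> \<bar>q - p\<bar> * Suc n" using kt by linarith
    then have "k < N n" unfolding N_def by linarith
    then have kI: "k \<in> I n" unfolding I_def using zJ z by auto
    define w0 where "w0 = (SOME z. z \<in> Sn n \<inter> J n k)"
    have w0: "w0 \<in> Sn n \<inter> J n k" unfolding w0_def using zJ z(1) by (metis IntI someI_ex)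
    have dist: "\<bar>z - w0\<bar> < 1 / Suc n"
    proof -
      have "w0 \<in> J n k" using w0 by auto
      then have "p + real k / Suc n \<le> w0" "w0 < p + (real k + 1) / Suc n" unfolding J_def by auto
      moreover have "p + real k / Suc n \<le> z" "z < p + (real k + 1) / Suc n" using zJ unfolding J_def by auto
      moreover have "(real k + 1) / Suc n = real k / Suc n + 1 / Suc n" by (simp add: add_divide_distrib)
      ultimately show ?thesis by linarith
    qed
    have "\<bar>H z - H w0\<bar> \<le> \<epsilon> / Suc n"
    proof (cases "z < w0")
      case True
      then have "\<bar>H w0 - H z\<bar> \<le> \<epsilon> * (w0 - z)" using z(1) dist unfolding Sn_def by auto
      also have "\<dots> \<le> \<epsilon> * (1 / Suc n)" using dist True \<open>\<epsilon>>0\<close> by (intro mult_left_mono) auto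
      finally show ?thesis by simp
    next
      case False
      show ?thesis
      proof (cases "w0 < z")
        case True
        then have "\<bar>H z - H w0\<bar> \<le> \<epsilon> * (z - w0)" using w0 dist unfolding Sn_def by auto
        also have "\<dots> \<le> \<epsilon> * (1 / Suc n)" using dist True \<open>\<epsilon>>0\<close> by (intro mult_left_mono) auto
        finally show ?thesis by simp
      next
        case False
        then have "z = w0" using \<open>\<not> z < w0\<close> by auto
        then show ?thesis using \<open>\<epsilon>>0\<close> by simp
      qed
    qed
    then have "y \<in> cball (ctr n k) (\<epsilon> / Suc n)"
      unfolding ctr_def w0_def[symmetric] z(2) mem_cball dist_real_def by simp
    then show "y \<in> C n" unfolding C_def using kI by auto
  qed
  have Cmeas: "C n \<in> lmeasurable" for n
    unfolding C_def using finI by (intro fmeasurable.finite_UN) auto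
  have Cclosed: "closed (C n)" for n
    unfolding C_def using finI by (intro closed_UN) auto
  have Cbd: "measure lebesgue (C n) \<le> e" for n
  proof -
    have "measure lebesgue (C n) \<le> (\<Sum>k\<in>I n. measure lebesgue (cball (ctr n k) (\<epsilon> / Suc n)))"
      unfolding C_def using finI by (intro measure_UNION_le) auto
    also have "\<dots> = (\<Sum>k\<in>I n. 2 * \<epsilon> / Suc n)"
    proof (intro sum.cong refl)
      fix k
      have "measure lebesgue (cball (ctr n k) (\<epsilon> / Suc n)) = measure lebesgue {ctr n k - \<epsilon> / Suc n .. ctr n k + \<epsilon> / Suc n}"
        by (simp add: cball_eq_atLeastAtMost)
      also have "\<dots> = 2 * \<epsilon> / Suc n" using \<open>\<epsilon>>0\<close> by simp
      finally show "measure lebesgue (cball (ctr n k) (\<epsilon> / Suc n)) = 2 * \<epsilon> / Suc n" .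
    qed
    also have "\<dots> = card (I n) * (2 * \<epsilon> / Suc n)" by simp
    also have "\<dots> \<le> N n * (2 * \<epsilon> / Suc n)" using cardI \<open>\<epsilon>>0\<close> by (intro mult_right_mono) auto
    also have "\<dots> \<le> (\<bar>q - p\<bar> * Suc n + 2) * (2 * \<epsilon> / Suc n)"
    proof (intro mult_right_mono)
      have "real (N n) = real (nat \<lceil>\<bar>q - p\<bar> * Suc n\<rceil>) + 1" unfolding N_def by simp
      also have "\<dots> \<le> \<bar>q - p\<bar> * Suc n + 2"
      proof -
        have "0 \<le> \<bar>q - p\<bar> * Suc n" by simp
        then have "real (nat \<lceil>\<bar>q - p\<bar> * Suc n\<rceil>) = of_int \<lceil>\<bar>q - p\<bar> * Suc n\<rceil>" by simp
        moreover have "of_int \<lceil>\<bar>q - p\<bar> * Suc n\<rceil> < \<bar>q - p\<bar> * Suc n + 1" by linarith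
        ultimately show ?thesis by linarith
      qed
      finally show "real (N n) \<le> \<bar>q - p\<bar> * Suc n + 2" .
    qed (use \<open>\<epsilon>>0\<close> in auto)
    also have "\<dots> = 2 * \<epsilon> * (\<bar>q - p\<bar> + 2 / Suc n)" by (simp add: field_simps)
    also have "\<dots> \<le> 2 * \<epsilon> * L" unfolding L_def using \<open>\<epsilon>>0\<close>
      by (intro mult_left_mono) (auto simp: field_simps)
    also have "\<dots> = e" unfolding \<epsilon>_def using \<open>L>0\<close> by simp
    finally show ?thesis .
  qed
  have Dsub: "Dn n \<subseteq> C n" for n unfolding Dn_def by auto
  have Dmeas: "Dn n \<in> lmeasurable" for n
  proof -
    have cl: "closed (Dn n)" unfolding Dn_def using Cclosed by auto
    have "bounded (C n)" unfolding C_def using finI by (simp add: bounded_UN)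
    then have "bounded (Dn n)" using Dsub bounded_subset by blast
    with cl show ?thesis by (intro lmeasurable_compact) (simp add: compact_eq_bounded_closed)
  qed
  have Dinc: "m \<le> n \<Longrightarrow> Dn m \<subseteq> Dn n" for m n unfolding Dn_def by auto
  have Dbd: "measure lebesgue (Dn n) \<le> e" for n
  proof -
    have "measure lebesgue (Dn n) \<le> measure lebesgue (C n)"
      using Dmeas[of n] Dsub[of n] Cmeas[of n] by (meson fmeasurableD measure_mono_fmeasurable)
    then show ?thesis using Cbd[of n] by linarith
  qed
  have cover: "H ` S \<subseteq> (\<Union>n. Dn n)"
  proof
    fix y assume "y \<in> H ` S"
    then obtain z where z: "z \<in> S" "y = H z" by auto
    obtain d where d: "d > 0" "\<And>w. z < w \<and> w < z + d \<Longrightarrow> \<bar>H w - H z\<bar> \<le> \<epsilon> * (w - z)"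
      using fl[OF z(1)] \<open>\<epsilon>>0\<close> unfolding rflat_def by blast
    obtain n :: nat where n0: "inverse (real (Suc n)) < d" using reals_Archimedean[OF d(1)] by blast
    have n: "1 / real (Suc n) < d" using n0 by (simp add: inverse_eq_divide)
    have "z \<in> Sn m" if "m \<ge> n" for m
    proof -
      have "1 / real (Suc m) \<le> 1 / Suc n" using that by (simp add: frac_le)
      then show ?thesis unfolding Sn_def using z(1) d(2) n by auto
    qed
    then have "y \<in> Dn n" unfolding Dn_def using HC z(2) by blast
    then show "y \<in> (\<Union>n. Dn n)" by blast
  qed
  show "\<exists>T. H ` S \<subseteq> T \<and> T \<in> lmeasurable \<and> measure lebesgue T \<le> e"
  proof (intro exI conjI)
    show "H ` S \<subseteq> (\<Union>n. Dn n)" by (rule cover)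
    have U: "(\<Union>i\<le>n. Dn i) = Dn n" for n using Dinc by auto
    show "(\<Union>n. Dn n) \<in> lmeasurable"
      by (rule fmeasurable_countable_Union[OF Dmeas, of _ e]) (simp add: U Dbd)
    show "measure lebesgue (\<Union>n. Dn n) \<le> e"
      by (rule measure_countable_Union_le[OF Dmeas]) (simp add: U Dbd)
  qed
qed

definition lflat :: "(real \<Rightarrow> real) \<Rightarrow> real \<Rightarrow> bool" where
  "lflat H z \<longleftrightarrow> (\<forall>e>0. \<exists>d>0. \<forall>w. z - d < w \<and> w < z \<longrightarrow> \<bar>H w - H z\<bar> \<le> e * (z - w))"

lemma lflat_refl: "lflat H z \<Longrightarrow> rflat (\<lambda>x. H (- x)) (- z)"
  unfolding lflat_def rflat_def
proof (intro allI impI)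
  fix e :: real assume L: "\<forall>e>0. \<exists>d>0. \<forall>w. z - d < w \<and> w < z \<longrightarrow> \<bar>H w - H z\<bar> \<le> e * (z - w)" and "e > 0"
  then obtain d where d: "d > 0" "\<And>w. z - d < w \<and> w < z \<Longrightarrow> \<bar>H w - H z\<bar> \<le> e * (z - w)" by blast
  show "\<exists>d>0. \<forall>w. - z < w \<and> w < - z + d \<longrightarrow> \<bar>H (- w) - H (- (- z))\<bar> \<le> e * (w - - z)"
  proof (intro exI conjI allI impI)
    fix w assume "- z < w \<and> w < - z + d"
    then have "z - d < - w \<and> - w < z" by auto
    from d(2)[OF this] show "\<bar>H (- w) - H (- (- z))\<bar> \<le> e * (w - - z)" by (simp add: add.commute)
  qed (use d in auto)
qed

lemma sard_left:
  fixes H :: "real \<Rightarrow> real"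
  assumes S: "S \<subseteq> {p..q}" and fl: "\<And>z. z \<in> S \<Longrightarrow> lflat H z"
  shows "negligible (H ` S)"
proof -
  have "negligible ((\<lambda>x. H (- x)) ` (uminus ` S))"
  proof (rule sard_right[where p = "-q" and q = "-p"])
    show "uminus ` S \<subseteq> {- q..- p}" using S by auto
    fix z assume "z \<in> uminus ` S"
    then obtain y where y: "y \<in> S" "z = - y" by auto
    show "rflat (\<lambda>x. H (- x)) z" using lflat_refl[OF fl[OF y(1)]] y(2) by simp
  qed
  moreover have "(\<lambda>x. H (- x)) ` (uminus ` S) = H ` S" by (auto simp: image_image)
  ultimately show ?thesis by simp
qed

lemma convex_right_deriv:
  fixes \<phi> :: "real \<Rightarrow> real"
  assumes cv: "convex_on {a..b} \<phi>" and az: "a < z" and zb: "z < b"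
  shows "\<exists>L. \<forall>e>0. \<exists>d>0. \<forall>w. z < w \<and> w < z + d \<longrightarrow> \<bar>\<phi> w - \<phi> z - L * (w - z)\<bar> \<le> e * (w - z)"
proof -
  define s where "s w = (\<phi> w - \<phi> z) / (w - z)" for w
  have mono: "s w1 \<le> s w2" if "z < w1" "w1 < w2" "w2 \<le> b" for w1 w2
  proof -
    have "(\<phi> z - \<phi> w1) / (z - w1) \<le> (\<phi> z - \<phi> w2) / (z - w2)"
      using convex_on_slope_le(1)[OF cv, of z w2 w1] that az zb by auto
    moreover have "(\<phi> z - \<phi> w1) / (z - w1) = s w1" "(\<phi> z - \<phi> w2) / (z - w2) = s w2"
      unfolding s_def using that by (simp_all add: divide_simps, (simp_all add: algebra_simps)?)
    ultimately show ?thesis by simp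
  qed
  have lb: "(\<phi> a - \<phi> z) / (a - z) \<le> s w" if "z < w" "w \<le> b" for w
  proof -
    have 1: "(\<phi> a - \<phi> z) / (a - z) \<le> (\<phi> a - \<phi> w) / (a - w)"
      using convex_on_slope_le(1)[OF cv, of a w z] that az zb by auto
    have 2: "(\<phi> a - \<phi> w) / (a - w) \<le> (\<phi> z - \<phi> w) / (z - w)"
      using convex_on_slope_le(2)[OF cv, of a w z] that az zb by auto
    have "(\<phi> z - \<phi> w) / (z - w) = s w"
      unfolding s_def using that by (simp add: divide_simps, (simp add: algebra_simps)?)
    with 1 2 show ?thesis by simp
  qed
  define L where "L = Inf (s ` {z<..b})"
  have ne: "s ` {z<..b} \<noteq> {}" using zb by auto
  have bdd: "bdd_below (s ` {z<..b})" using lb by (auto intro!: bdd_belowI[where m = "(\<phi> a - \<phi> z) / (a - z)"])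
  show ?thesis
  proof (rule exI[of _ L], intro allI impI)
    fix e :: real assume "e > 0"
    have "L < L + e" using \<open>e>0\<close> by simp
    then obtain y where y: "y \<in> s ` {z<..b}" "y < L + e" using cInf_lessD[OF ne] unfolding L_def by blast
    then obtain w1 where w1: "z < w1" "w1 \<le> b" "s w1 < L + e" by auto
    show "\<exists>d>0. \<forall>w. z < w \<and> w < z + d \<longrightarrow> \<bar>\<phi> w - \<phi> z - L * (w - z)\<bar> \<le> e * (w - z)"
    proof (intro exI conjI allI impI)
      show "w1 - z > 0" using w1 by simp
      fix w assume w: "z < w \<and> w < z + (w1 - z)"
      have "s w \<le> s w1" using mono[of w w1] w w1 by auto
      moreover have "L \<le> s w" unfolding L_def using w w1 by (intro cInf_lower[OF _ bdd]) auto
      ultimately have "\<bar>s w - L\<bar> \<le> e" using w1 by auto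
      moreover have "\<phi> w - \<phi> z - L * (w - z) = (s w - L) * (w - z)"
        unfolding s_def using w by (simp add: divide_simps, (simp add: algebra_simps)?)
      ultimately show "\<bar>\<phi> w - \<phi> z - L * (w - z)\<bar> \<le> e * (w - z)"
        using w by (simp add: abs_mult mult_right_mono)
    qed
  qed
qed

lemma convex_left_deriv:
  fixes \<phi> :: "real \<Rightarrow> real"
  assumes cv: "convex_on {a..b} \<phi>" and az: "a < z" and zb: "z < b"
  shows "\<exists>L. \<forall>e>0. \<exists>d>0. \<forall>w. z - d < w \<and> w < z \<longrightarrow> \<bar>\<phi> w - \<phi> z - L * (w - z)\<bar> \<le> e * (z - w)"
proof -
  define s where "s w = (\<phi> w - \<phi> z) / (w - z)" for w
  have mono: "s w1 \<le> s w2" if "a \<le> w1" "w1 < w2" "w2 < z" for w1 w2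
  proof -
    have "(\<phi> w1 - \<phi> z) / (w1 - z) \<le> (\<phi> w2 - \<phi> z) / (w2 - z)"
      using convex_on_slope_le(2)[OF cv, of w1 z w2] that az zb by auto
    then show ?thesis unfolding s_def .
  qed
  have ub: "s w \<le> (\<phi> z - \<phi> b) / (z - b)" if "a \<le> w" "w < z" for w
  proof -
    have 1: "(\<phi> w - \<phi> z) / (w - z) \<le> (\<phi> w - \<phi> b) / (w - b)"
      using convex_on_slope_le(1)[OF cv, of w b z] that az zb by auto
    have 2: "(\<phi> w - \<phi> b) / (w - b) \<le> (\<phi> z - \<phi> b) / (z - b)"
      using convex_on_slope_le(2)[OF cv, of w b z] that az zb by auto
    from 1 2 show ?thesis unfolding s_def by simp
  qed
  define L where "L = Sup (s ` {a..<z})"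
  have ne: "s ` {a..<z} \<noteq> {}" using az by auto
  have bdd: "bdd_above (s ` {a..<z})" using ub by (auto intro!: bdd_aboveI[where M = "(\<phi> z - \<phi> b) / (z - b)"])
  show ?thesis
  proof (rule exI[of _ L], intro allI impI)
    fix e :: real assume "e > 0"
    have "L - e < L" using \<open>e>0\<close> by simp
    then obtain y where y: "y \<in> s ` {a..<z}" "L - e < y" using less_cSupD[OF ne] unfolding L_def by blast
    then obtain w1 where w1: "a \<le> w1" "w1 < z" "L - e < s w1" by auto
    show "\<exists>d>0. \<forall>w. z - d < w \<and> w < z \<longrightarrow> \<bar>\<phi> w - \<phi> z - L * (w - z)\<bar> \<le> e * (z - w)"
    proof (intro exI conjI allI impI)
      show "z - w1 > 0" using w1 by simp
      fix w assume w: "z - (z - w1) < w \<and> w < z"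
      have "s w1 \<le> s w" using mono[of w1 w] w w1 by auto
      moreover have "s w \<le> L" unfolding L_def using w w1 by (intro cSup_upper[OF _ bdd]) auto
      ultimately have "\<bar>s w - L\<bar> \<le> e" using w1 by auto
      moreover have "\<phi> w - \<phi> z - L * (w - z) = (L - s w) * (z - w)"
        unfolding s_def using w by (simp add: divide_simps, (simp add: algebra_simps)?)
      ultimately show "\<bar>\<phi> w - \<phi> z - L * (w - z)\<bar> \<le> e * (z - w)"
        using w by (simp add: abs_mult mult_right_mono abs_minus_commute)
    qed
  qed
qed

lemma accum_rflat:
  fixes \<phi> \<psi> :: "real \<Rightarrow> real"
  assumes d\<phi>: "\<forall>e>0. \<exists>d>0. \<forall>w. z < w \<and> w < z + d \<longrightarrow> \<bar>\<phi> w - \<phi> z - La * (w - z)\<bar> \<le> e * (w - z)"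
      and d\<psi>: "\<forall>e>0. \<exists>d>0. \<forall>w. z < w \<and> w < z + d \<longrightarrow> \<bar>\<psi> w - \<psi> z - Lb * (w - z)\<bar> \<le> e * (w - z)"
      and pos: "\<psi> z > 0"
      and acc: "\<forall>d>0. \<exists>w. z < w \<and> w < z + d \<and> \<phi> w - (\<phi> z / \<psi> z) * \<psi> w = 0"
  shows "rflat (\<lambda>x. \<phi> x / \<psi> x) z"
proof -
  define b where "b = \<phi> z / \<psi> z"
  have \<phi>z: "\<phi> z = b * \<psi> z" unfolding b_def using pos by simp
  define \<kappa> where "\<kappa> = La - b * Lb"
  have key: "\<phi> w - b * \<psi> w = \<kappa> * (w - z) + (\<phi> w - \<phi> z - La * (w - z)) - b * (\<psi> w - \<psi> z - Lb * (w - z))" for w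
    unfolding \<kappa>_def using \<phi>z by (simp add: algebra_simps)
  have k0: "\<kappa> = 0"
  proof (rule ccontr)
    assume "\<kappa> \<noteq> 0"
    define e1 where "e1 = \<bar>\<kappa>\<bar> / (2 * (1 + \<bar>b\<bar>))"
    have e1: "e1 > 0" unfolding e1_def using \<open>\<kappa> \<noteq> 0\<close> by (simp add: add_pos_nonneg)
    obtain d1 where d1: "d1 > 0" "\<And>w. z < w \<and> w < z + d1 \<Longrightarrow> \<bar>\<phi> w - \<phi> z - La * (w - z)\<bar> \<le> e1 * (w - z)"
      using d\<phi> e1 by blast
    obtain d2 where d2: "d2 > 0" "\<And>w. z < w \<and> w < z + d2 \<Longrightarrow> \<bar>\<psi> w - \<psi> z - Lb * (w - z)\<bar> \<le> e1 * (w - z)"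
      using d\<psi> e1 by blast
    obtain w where w: "z < w" "w < z + min d1 d2" "\<phi> w - b * \<psi> w = 0"
      using acc d1(1) d2(1) unfolding b_def by (metis min_less_iff_conj)
    define E1 where "E1 = \<phi> w - \<phi> z - La * (w - z)"
    define E2 where "E2 = \<psi> w - \<psi> z - Lb * (w - z)"
    have E1: "\<bar>E1\<bar> \<le> e1 * (w - z)" unfolding E1_def using d1(2)[of w] w(1) w(2) by simp
    have E2: "\<bar>E2\<bar> \<le> e1 * (w - z)" unfolding E2_def using d2(2)[of w] w(1) w(2) by simp
    have eqk: "\<kappa> * (w - z) = - E1 + b * E2" using key[of w] w(3) unfolding E1_def E2_def by linarith
    have "\<bar>\<kappa>\<bar> * (w - z) = \<bar>\<kappa> * (w - z)\<bar>" using w(1) by (simp add: abs_mult)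
    also have "\<dots> = \<bar>- E1 + b * E2\<bar>" using eqk by simp
    also have "\<dots> \<le> \<bar>E1\<bar> + \<bar>b\<bar> * \<bar>E2\<bar>"
      using abs_triangle_ineq[of "- E1" "b * E2"] by (simp add: abs_mult)
    also have "\<dots> \<le> e1 * (w - z) + \<bar>b\<bar> * (e1 * (w - z))"
      using E1 E2 by (intro add_mono mult_left_mono) auto
    also have "\<dots> = (e1 * (1 + \<bar>b\<bar>)) * (w - z)" by (simp add: algebra_simps)
    also have "e1 * (1 + \<bar>b\<bar>) = \<bar>\<kappa>\<bar> / 2"
    proof -
      have "1 + \<bar>b\<bar> > 0" by (simp add: add_pos_nonneg)
      then show ?thesis unfolding e1_def by (simp add: field_simps)
    qed
    finally have kk: "\<bar>\<kappa>\<bar> * (w - z) \<le> \<bar>\<kappa>\<bar> / 2 * (w - z)" .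
    have "\<bar>\<kappa>\<bar> \<le> \<bar>\<kappa>\<bar> / 2" using mult_right_le_imp_le[OF kk] w(1) by simp
    then show False using \<open>\<kappa> \<noteq> 0\<close> by simp
  qed
  show ?thesis unfolding rflat_def
  proof (intro allI impI)
    fix e :: real assume "e > 0"
    define e1 where "e1 = e * \<psi> z / (2 * (1 + \<bar>b\<bar>))"
    have e1: "e1 > 0" unfolding e1_def using \<open>e>0\<close> pos by (simp add: add_pos_nonneg)
    obtain d1 where d1: "d1 > 0" "\<And>w. z < w \<and> w < z + d1 \<Longrightarrow> \<bar>\<phi> w - \<phi> z - La * (w - z)\<bar> \<le> e1 * (w - z)"
      using d\<phi> e1 by blast
    obtain d2 where d2: "d2 > 0" "\<And>w. z < w \<and> w < z + d2 \<Longrightarrow> \<bar>\<psi> w - \<psi> z - Lb * (w - z)\<bar> \<le> e1 * (w - z)"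
      using d\<psi> e1 by blast
    obtain d3 where d3: "d3 > 0" "\<And>w. z < w \<and> w < z + d3 \<Longrightarrow> \<bar>\<psi> w - \<psi> z - Lb * (w - z)\<bar> \<le> 1 * (w - z)"
      using d\<psi> by (meson zero_less_one)
    define d4 where "d4 = \<psi> z / (2 * (\<bar>Lb\<bar> + 1))"
    have d4: "d4 > 0" unfolding d4_def using pos by (simp add: add_nonneg_pos)
    show "\<exists>d>0. \<forall>w. z < w \<and> w < z + d \<longrightarrow> \<bar>\<phi> w / \<psi> w - \<phi> z / \<psi> z\<bar> \<le> e * (w - z)"
    proof (intro exI[of _ "min (min d1 d2) (min d3 d4)"] conjI allI impI)
      show "min (min d1 d2) (min d3 d4) > 0" using d1 d2 d3 d4 by simp
      fix w assume w: "z < w \<and> w < z + min (min d1 d2) (min d3 d4)"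
      define E1 where "E1 = \<phi> w - \<phi> z - La * (w - z)"
      define E2 where "E2 = \<psi> w - \<psi> z - Lb * (w - z)"
      have "w - z < min (min d1 d2) (min d3 d4)" using w by linarith
      then have wd: "w - z < d1" "w - z < d2" "w - z < d3" "w - z < d4" by auto
      have E1: "\<bar>E1\<bar> \<le> e1 * (w - z)" unfolding E1_def using d1(2)[of w] w wd by simp
      have E2: "\<bar>E2\<bar> \<le> e1 * (w - z)" unfolding E2_def using d2(2)[of w] w wd by simp
      have E3: "\<bar>E2\<bar> \<le> 1 * (w - z)" unfolding E2_def using d3(2)[of w] w wd by simp
      have "w - z < d4" using wd by simp
      then have "(\<bar>Lb\<bar> + 1) * (w - z) \<le> \<psi> z / 2" unfolding d4_def
        by (simp add: field_simps)
      moreover have "\<psi> w \<ge> \<psi> z - (\<bar>Lb\<bar> + 1) * (w - z)"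
      proof -
        have "\<psi> w = \<psi> z + Lb * (w - z) + E2" unfolding E2_def by simp
        moreover have "Lb * (w - z) \<ge> - \<bar>Lb\<bar> * (w - z)" using w
          by (intro mult_right_mono) auto
        moreover have "E2 \<ge> - (w - z)" using E3 by (simp add: abs_le_iff)
        ultimately show ?thesis by (simp add: algebra_simps)
      qed
      ultimately have \<psi>w: "\<psi> w \<ge> \<psi> z / 2" by linarith
      have "\<phi> w / \<psi> w - \<phi> z / \<psi> z = (\<phi> w - b * \<psi> w) / \<psi> w"
        using \<psi>w pos unfolding b_def by (simp add: field_simps)
      also have "\<phi> w - b * \<psi> w = E1 - b * E2" using key[of w] k0 unfolding E1_def E2_def by simp
      finally have eq: "\<phi> w / \<psi> w - \<phi> z / \<psi> z = (E1 - b * E2) / \<psi> w" .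
      have "\<bar>E1 - b * E2\<bar> \<le> \<bar>E1\<bar> + \<bar>b\<bar> * \<bar>E2\<bar>"
        using abs_triangle_ineq4[of E1 "b * E2"] by (simp add: abs_mult)
      also have "\<dots> \<le> e1 * (w - z) + \<bar>b\<bar> * (e1 * (w - z))"
        using E1 E2 by (intro add_mono mult_left_mono) auto
      also have "\<dots> = (e1 * (1 + \<bar>b\<bar>)) * (w - z)" by (simp add: algebra_simps)
      also have "e1 * (1 + \<bar>b\<bar>) = e * (\<psi> z / 2)"
      proof -
        have "1 + \<bar>b\<bar> > 0" by (simp add: add_pos_nonneg)
        then show ?thesis unfolding e1_def by (simp add: field_simps)
      qed
      also have "e * (\<psi> z / 2) * (w - z) = (e * (w - z)) * (\<psi> z / 2)" by simp
      also have "\<dots> \<le> (e * (w - z)) * \<psi> w" using \<psi>w w \<open>e>0\<close> by (intro mult_left_mono) auto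
      finally have fin: "\<bar>E1 - b * E2\<bar> \<le> e * (w - z) * \<psi> w" .
      have pw: "\<psi> w > 0" using \<psi>w pos by linarith
      have "\<bar>(E1 - b * E2) / \<psi> w\<bar> = \<bar>E1 - b * E2\<bar> / \<psi> w" using pw by (simp add: abs_divide)
      also have "\<dots> \<le> e * (w - z)" using fin pw by (simp add: pos_divide_le_eq)
      finally show "\<bar>\<phi> w / \<psi> w - \<phi> z / \<psi> z\<bar> \<le> e * (w - z)" unfolding eq .
    qed
  qed
qed

lemma accum_lflat:
  fixes \<phi> \<psi> :: "real \<Rightarrow> real"
  assumes d\<phi>: "\<forall>e>0. \<exists>d>0. \<forall>w. z - d < w \<and> w < z \<longrightarrow> \<bar>\<phi> w - \<phi> z - La * (w - z)\<bar> \<le> e * (z - w)"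
      and d\<psi>: "\<forall>e>0. \<exists>d>0. \<forall>w. z - d < w \<and> w < z \<longrightarrow> \<bar>\<psi> w - \<psi> z - Lb * (w - z)\<bar> \<le> e * (z - w)"
      and pos: "\<psi> z > 0"
      and acc: "\<forall>d>0. \<exists>w. z - d < w \<and> w < z \<and> \<phi> w - (\<phi> z / \<psi> z) * \<psi> w = 0"
  shows "lflat (\<lambda>x. \<phi> x / \<psi> x) z"
proof -
  have R: "rflat (\<lambda>x. \<phi> (- x) / \<psi> (- x)) (- z)"
  proof (rule accum_rflat[where La = "- La" and Lb = "- Lb"])
    show "\<forall>e>0. \<exists>d>0. \<forall>w. - z < w \<and> w < - z + d \<longrightarrow>
      \<bar>\<phi> (- w) - \<phi> (- (- z)) - - La * (w - - z)\<bar> \<le> e * (w - - z)"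
    proof (intro allI impI)
      fix e :: real assume "e > 0"
      then obtain d where d: "d > 0" "\<And>w. z - d < w \<and> w < z \<Longrightarrow> \<bar>\<phi> w - \<phi> z - La * (w - z)\<bar> \<le> e * (z - w)"
        using d\<phi> by blast
      show "\<exists>d>0. \<forall>w. - z < w \<and> w < - z + d \<longrightarrow> \<bar>\<phi> (- w) - \<phi> (- (- z)) - - La * (w - - z)\<bar> \<le> e * (w - - z)"
      proof (intro exI[of _ d] conjI allI impI)
        fix w assume "- z < w \<and> w < - z + d"
        then have "z - d < - w \<and> - w < z" by auto
        from d(2)[OF this] show "\<bar>\<phi> (- w) - \<phi> (- (- z)) - - La * (w - - z)\<bar> \<le> e * (w - - z)"
          by (simp add: algebra_simps)
      qed (use d in auto)
    qed
    show "\<forall>e>0. \<exists>d>0. \<forall>w. - z < w \<and> w < - z + d \<longrightarrow>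
      \<bar>\<psi> (- w) - \<psi> (- (- z)) - - Lb * (w - - z)\<bar> \<le> e * (w - - z)"
    proof (intro allI impI)
      fix e :: real assume "e > 0"
      then obtain d where d: "d > 0" "\<And>w. z - d < w \<and> w < z \<Longrightarrow> \<bar>\<psi> w - \<psi> z - Lb * (w - z)\<bar> \<le> e * (z - w)"
        using d\<psi> by blast
      show "\<exists>d>0. \<forall>w. - z < w \<and> w < - z + d \<longrightarrow> \<bar>\<psi> (- w) - \<psi> (- (- z)) - - Lb * (w - - z)\<bar> \<le> e * (w - - z)"
      proof (intro exI[of _ d] conjI allI impI)
        fix w assume "- z < w \<and> w < - z + d"
        then have "z - d < - w \<and> - w < z" by auto
        from d(2)[OF this] show "\<bar>\<psi> (- w) - \<psi> (- (- z)) - - Lb * (w - - z)\<bar> \<le> e * (w - - z)"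
          by (simp add: algebra_simps)
      qed (use d in auto)
    qed
    show "\<psi> (- (- z)) > 0" using pos by simp
    show "\<forall>d>0. \<exists>w. - z < w \<and> w < - z + d \<and> \<phi> (- w) - \<phi> (- (- z)) / \<psi> (- (- z)) * \<psi> (- w) = 0"
    proof (intro allI impI)
      fix d :: real assume "d > 0"
      then obtain w where "z - d < w" "w < z" "\<phi> w - (\<phi> z / \<psi> z) * \<psi> w = 0" using acc by blast
      then show "\<exists>w. - z < w \<and> w < - z + d \<and> \<phi> (- w) - \<phi> (- (- z)) / \<psi> (- (- z)) * \<psi> (- w) = 0"
        by (intro exI[of _ "- w"]) auto
    qed
  qed
  show ?thesis unfolding lflat_def
  proof (intro allI impI)
    fix e :: real assume "e > 0"
    then obtain d where d: "d > 0" "\<And>w. - z < w \<and> w < - z + d \<Longrightarrow> \<bar>\<phi> (- w) / \<psi> (- w) - \<phi> (- (- z)) / \<psi> (- (- z))\<bar> \<le> e * (w - - z)"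
      using R unfolding rflat_def by blast
    show "\<exists>d>0. \<forall>w. z - d < w \<and> w < z \<longrightarrow> \<bar>\<phi> w / \<psi> w - \<phi> z / \<psi> z\<bar> \<le> e * (z - w)"
    proof (intro exI[of _ d] conjI allI impI)
      fix w assume "z - d < w \<and> w < z"
      then have "- z < - w \<and> - w < - z + d" by auto
      from d(2)[OF this] show "\<bar>\<phi> w / \<psi> w - \<phi> z / \<psi> z\<bar> \<le> e * (z - w)" by (simp add: algebra_simps)
    qed (use d in auto)
  qed
qed

lemma sign_switches_uminus: "sign_switches (\<lambda>x. - \<Delta> x) c0 d0 = sign_switches \<Delta> c0 d0"
proof -
  have im: "((\<lambda>x. - \<Delta> x) ` A = {0}) \<longleftrightarrow> (\<Delta> ` A = {0})" for A
  proof
    assume a: "(\<lambda>x. - \<Delta> x) ` A = {0}"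
    then have "A \<noteq> {}" by auto
    moreover have "\<forall>x\<in>A. \<Delta> x = 0"
    proof
      fix x assume "x \<in> A"
      then have "- \<Delta> x \<in> (\<lambda>x. - \<Delta> x) ` A" by auto
      then show "\<Delta> x = 0" using a by simp
    qed
    ultimately show "\<Delta> ` A = {0}" by auto
  next
    assume "\<Delta> ` A = {0}"
    then have "A \<noteq> {}" "\<forall>x\<in>A. \<Delta> x = 0" by auto
    then show "(\<lambda>x. - \<Delta> x) ` A = {0}" by auto
  qed
  show ?thesis unfolding sign_switches_def by (simp add: im)
qed

lemma switch_pos:
  fixes \<Delta> :: "real \<Rightarrow> real"
  assumes cont: "continuous_on {p..q} \<Delta>" and p0: "0 < p" and pq: "p < q" and qD: "q < D"
    and sp: "\<Delta> p > 0" and sq: "\<Delta> q < 0"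
    and iso: "\<And>z. p < z \<Longrightarrow> z < q \<Longrightarrow> \<Delta> z = 0 \<Longrightarrow> \<exists>\<delta>>0. \<forall>w. w \<noteq> z \<and> \<bar>w - z\<bar> < \<delta> \<longrightarrow> \<Delta> w \<noteq> 0"
  shows "\<exists>z. p < z \<and> z < q \<and> (z, z) \<in> sign_switches \<Delta> 0 D"
proof -
  define T where "T = {y \<in> {p..q}. \<Delta> y < 0}"
  define z where "z = Inf T"
  have qT: "q \<in> T" using sq pq unfolding T_def by auto
  have Tne: "T \<noteq> {}" using qT by auto
  have bddT: "bdd_below T" unfolding T_def by (auto intro: bdd_belowI[of _ p])
  have zle: "z \<le> q" unfolding z_def using qT bddT by (simp add: cInf_lower)
  have pz: "p \<le> z" unfolding z_def using Tne by (intro cInf_greatest) (auto simp: T_def)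
  have Tz: "z \<le> y" if "y \<in> T" for y unfolding z_def using that bddT by (simp add: cInf_lower)
  have nonneg: "\<Delta> y \<ge> 0" if "p \<le> y" "y < z" for y
  proof (rule ccontr)
    assume "\<not> \<Delta> y \<ge> 0" then have "y \<in> T" using that zle unfolding T_def by auto
    then show False using Tz[of y] that by simp
  qed
  have near: "\<exists>y\<in>T. y < z + e" if "e > 0" for e
    using cInf_lessD[OF Tne, of "z + e"] that unfolding z_def by auto
  have zI: "z \<in> {p..q}" using pz zle by auto
  have ct: "\<forall>e>0. \<exists>d>0. \<forall>y\<in>{p..q}. \<bar>y - z\<bar> < d \<longrightarrow> \<bar>\<Delta> y - \<Delta> z\<bar> < e"
    using cont zI unfolding continuous_on_iff dist_real_def by blast
  have nposz: "\<not> \<Delta> z > 0"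
  proof
    assume "\<Delta> z > 0"
    then obtain d where d: "d > 0" "\<And>y. y \<in> {p..q} \<Longrightarrow> \<bar>y - z\<bar> < d \<Longrightarrow> \<bar>\<Delta> y - \<Delta> z\<bar> < \<Delta> z"
      using ct by blast
    obtain y where y: "y \<in> T" "y < z + d" using near d(1) by blast
    have "y \<in> {p..q}" "\<Delta> y < 0" using y(1) unfolding T_def by auto
    moreover have "\<bar>y - z\<bar> < d" using Tz[OF y(1)] y(2) by simp
    ultimately show False using d(2)[of y] by simp
  qed
  have nnegz: "\<not> \<Delta> z < 0"
  proof
    assume neg: "\<Delta> z < 0"
    then have "p \<noteq> z" using sp by auto
    then have "p < z" using pz by simp
    obtain d where d: "d > 0" "\<And>y. y \<in> {p..q} \<Longrightarrow> \<bar>y - z\<bar> < d \<Longrightarrow> \<bar>\<Delta> y - \<Delta> z\<bar> < - \<Delta> z"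
      using ct neg by (meson neg_0_less_iff_less)
    define y where "y = max p (z - d / 2)"
    have "y \<in> {p..q}" "\<bar>y - z\<bar> < d" "p \<le> y" "y < z" unfolding y_def using d(1) \<open>p < z\<close> zle by auto
    then show False using d(2)[of y] nonneg[of y] by simp
  qed
  have \<Delta>z0: "\<Delta> z = 0" using nposz nnegz by simp
  have pz': "p < z" using \<Delta>z0 sp pz by (cases "p = z") auto
  have zq': "z < q" using \<Delta>z0 sq zle by (cases "z = q") auto
  obtain \<delta>0 where \<delta>0: "\<delta>0 > 0" "\<And>w. w \<noteq> z \<and> \<bar>w - z\<bar> < \<delta>0 \<Longrightarrow> \<Delta> w \<noteq> 0"
    using iso[OF pz' zq' \<Delta>z0] by blast
  define \<delta> where "\<delta> = min (\<delta>0/2) (min (z - p) (q - z))"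
  have \<delta>: "\<delta> > 0" "\<delta> \<le> min (z - 0) (D - z)" "\<delta> < \<delta>0" "\<delta> \<le> z - p" "\<delta> \<le> q - z"
    unfolding \<delta>_def using \<delta>0(1) pz' zq' qD p0 by auto
  have left: "\<Delta> (z - x) > 0" if "0 < x" "x \<le> \<delta>" for x
  proof -
    have "\<Delta> (z - x) \<ge> 0" using nonneg[of "z - x"] that \<delta> by auto
    moreover have "\<Delta> (z - x) \<noteq> 0" using \<delta>0(2)[of "z - x"] that \<delta> by auto
    ultimately show ?thesis by simp
  qed
  have right: "\<Delta> (z + x) < 0" if x0: "0 < x" "x \<le> \<delta>" for x
  proof (rule ccontr)
    assume "\<not> \<Delta> (z + x) < 0"
    moreover have "\<Delta> (z + x) \<noteq> 0" using \<delta>0(2)[of "z + x"] that \<delta> by auto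
    ultimately have pos: "\<Delta> (z + x) > 0" by simp
    obtain y where y: "y \<in> T" "y < z + x" using near x0(1) by blast
    have yz: "z \<le> y" using Tz[OF y(1)] .
    have "\<Delta> y < 0" "p \<le> y" using y(1) unfolding T_def by auto
    have "continuous_on {y..z+x} \<Delta>"
      using cont by (rule continuous_on_subset) (use \<open>p \<le> y\<close> \<delta> x0 in auto)
    then obtain w where w: "y \<le> w" "w \<le> z + x" "\<Delta> w = 0"
      using IVT'[of \<Delta> y 0 "z + x"] \<open>\<Delta> y < 0\<close> pos y(2) by auto
    have "w \<noteq> z" using w(1) yz \<open>\<Delta> y < 0\<close> \<Delta>z0 by (cases "y = z") auto
    moreover have "\<bar>w - z\<bar> < \<delta>0" using w yz x0 \<delta> by auto
    ultimately show False using \<delta>0(2)[of w] w(3) by simp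
  qed
  show ?thesis
  proof (intro exI conjI)
    show "p < z" "z < q" by (fact pz') (fact zq')
    show "(z, z) \<in> sign_switches \<Delta> 0 D"
      unfolding sign_switches_def
    proof (simp, intro conjI)
      show "0 < z" using pz' p0 by simp
      show "z < D" using zq' qD by simp
      show "\<Delta> z = 0" by (fact \<Delta>z0)
      show "\<exists>\<delta>>0. \<delta> \<le> z \<and> \<delta> \<le> D - z \<and> (\<forall>x\<in>{0<..\<delta>}. \<Delta> (z - x) * \<Delta> (z + x) < 0)"
      proof (intro exI[of _ \<delta>] conjI ballI)
        fix x assume "x \<in> {0<..\<delta>}"
        then have "0 < x" "x \<le> \<delta>" by auto
        then show "\<Delta> (z - x) * \<Delta> (z + x) < 0" using left right by (simp add: mult_pos_neg)
      qed (use \<delta> in auto)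
    qed
  qed
qed

lemma switch_exists:
  fixes \<Delta> :: "real \<Rightarrow> real"
  assumes cont: "continuous_on {p..q} \<Delta>" and p0: "0 < p" and pq: "p < q" and qD: "q < D"
    and sg: "\<Delta> p * \<Delta> q < 0"
    and iso: "\<And>z. p < z \<Longrightarrow> z < q \<Longrightarrow> \<Delta> z = 0 \<Longrightarrow> \<exists>\<delta>>0. \<forall>w. w \<noteq> z \<and> \<bar>w - z\<bar> < \<delta> \<longrightarrow> \<Delta> w \<noteq> 0"
  shows "\<exists>z. p < z \<and> z < q \<and> (z, z) \<in> sign_switches \<Delta> 0 D"
proof (cases "\<Delta> p > 0")
  case True
  then have "\<Delta> q < 0" using sg by (simp add: mult_less_0_iff)
  then show ?thesis using switch_pos[OF cont p0 pq qD True] iso by blast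
next
  case False
  then have a: "- \<Delta> p > 0" "- \<Delta> q < 0" using sg by (auto simp: mult_less_0_iff)
  have "\<exists>z. p < z \<and> z < q \<and> (z, z) \<in> sign_switches (\<lambda>x. - \<Delta> x) 0 D"
  proof (rule switch_pos[OF _ p0 pq qD a])
    show "continuous_on {p..q} (\<lambda>x. - \<Delta> x)" using cont by (intro continuous_intros)
    fix z assume "p < z" "z < q" "- \<Delta> z = 0"
    then show "\<exists>\<delta>>0. \<forall>w. w \<noteq> z \<and> \<bar>w - z\<bar> < \<delta> \<longrightarrow> - \<Delta> w \<noteq> 0" using iso by simp
  qed
  then show ?thesis by (simp add: sign_switches_uminus)
qed

lemma three_switches:
  assumes "(a, a) \<in> sign_switches \<Delta> c0 d0" "(b, b) \<in> sign_switches \<Delta> c0 d0" "(c, c) \<in> sign_switches \<Delta> c0 d0"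
    and "a < b" "b < c"
  shows "3 \<le> num_sign_switches \<Delta> c0 d0"
proof (cases "finite (sign_switches \<Delta> c0 d0)")
  case True
  have sub: "{(a, a), (b, b), (c, c)} \<subseteq> sign_switches \<Delta> c0 d0" using assms by auto
  have "card {(a, a), (b, b), (c, c)} = 3" using assms(4,5) by auto
  then have "3 \<le> card (sign_switches \<Delta> c0 d0)" using card_mono[OF True sub] by simp
  then show ?thesis unfolding num_sign_switches_def using True
    by (simp add: numeral_eq_enat)
next
  case False
  then show ?thesis unfolding num_sign_switches_def by simp
qed

lemma sign_keep:
  fixes v1 v2 t1 t2 :: real
  assumes "v1 * v2 < 0" "\<bar>t1\<bar> < \<bar>v1\<bar>" "\<bar>t2\<bar> < \<bar>v2\<bar>"
  shows "(v1 - t1) * (v2 - t2) < 0"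
proof -
  have "v1 \<noteq> 0" "v2 \<noteq> 0" using assms(1) by auto
  have a: "(v1 - t1) * v1 > 0"
    using assms(2) by (cases "v1 > 0") (auto simp: abs_if mult_pos_pos mult_neg_neg split: if_splits)
  have b: "(v2 - t2) * v2 > 0"
    using assms(3) by (cases "v2 > 0") (auto simp: abs_if mult_pos_pos mult_neg_neg split: if_splits)
  have P: "((v1 - t1) * (v2 - t2)) * (v1 * v2) > 0"
    using mult_pos_pos[OF a b] by (simp add: algebra_simps)
  show ?thesis
  proof (rule ccontr)
    assume "\<not> (v1 - t1) * (v2 - t2) < 0"
    then have "(v1 - t1) * (v2 - t2) \<ge> 0" by simp
    then have "((v1 - t1) * (v2 - t2)) * (v1 * v2) \<le> 0"
      using mult_nonneg_nonpos[of "(v1 - t1) * (v2 - t2)" "v1 * v2"] assms(1) by linarith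
    with P show False by simp
  qed
qed

lemma key_three:
  fixes \<phi> \<psi> :: "real \<Rightarrow> real"
  assumes c\<phi>: "continuous_on {0..D} \<phi>" and c\<psi>: "continuous_on {0..D} \<psi>"
    and v\<phi>: "convex_on {0..D} \<phi>" and v\<psi>: "convex_on {0..D} \<psi>"
    and ps: "0 < pa" "pa < pb" "pb < pc" "pc < pd" "pd < D"
    and pos: "\<And>x. pa \<le> x \<Longrightarrow> x \<le> pd \<Longrightarrow> \<psi> x > 0"
    and bz: "bz > 0"
    and s12: "(\<phi> pa - bz * \<psi> pa) * (\<phi> pb - bz * \<psi> pb) < 0"
    and s23: "(\<phi> pb - bz * \<psi> pb) * (\<phi> pc - bz * \<psi> pc) < 0"
    and s34: "(\<phi> pc - bz * \<psi> pc) * (\<phi> pd - bz * \<psi> pd) < 0"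
  shows "\<exists>b>0. 3 \<le> num_sign_switches (\<lambda>x. \<phi> x - b * \<psi> x) 0 D"
proof -
  define v where "v x = \<phi> x - bz * \<psi> x" for x
  have vnz: "v pa \<noteq> 0" "v pb \<noteq> 0" "v pc \<noteq> 0" "v pd \<noteq> 0" using s12 s34 unfolding v_def by auto
  have \<psi>p: "\<psi> pa > 0" "\<psi> pb > 0" "\<psi> pc > 0" "\<psi> pd > 0" using pos ps by auto
  define \<epsilon> where "\<epsilon> = min bz (min (min (\<bar>v pa\<bar> / \<psi> pa) (\<bar>v pb\<bar> / \<psi> pb)) (min (\<bar>v pc\<bar> / \<psi> pc) (\<bar>v pd\<bar> / \<psi> pd)))"
  have q: "\<bar>v pa\<bar> / \<psi> pa > 0" "\<bar>v pb\<bar> / \<psi> pb > 0" "\<bar>v pc\<bar> / \<psi> pc > 0" "\<bar>v pd\<bar> / \<psi> pd > 0"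
    using vnz \<psi>p by (simp_all add: divide_pos_pos)
  have \<epsilon>: "\<epsilon> > 0" unfolding \<epsilon>_def using q bz by simp
  have el: "\<epsilon> \<le> \<bar>v pa\<bar> / \<psi> pa" "\<epsilon> \<le> \<bar>v pb\<bar> / \<psi> pb" "\<epsilon> \<le> \<bar>v pc\<bar> / \<psi> pc" "\<epsilon> \<le> \<bar>v pd\<bar> / \<psi> pd"
    unfolding \<epsilon>_def by (simp_all add: min_le_iff_disj)
  have small: "\<bar>(b - bz) * \<psi> x\<bar> < \<bar>v x\<bar>" if "\<bar>b - bz\<bar> < \<epsilon>" "\<psi> x > 0" "\<epsilon> \<le> \<bar>v x\<bar> / \<psi> x" for b x
  proof -
    have "\<bar>b - bz\<bar> < \<bar>v x\<bar> / \<psi> x" using that by linarith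
    then have "\<bar>b - bz\<bar> * \<psi> x < \<bar>v x\<bar>" using that(2) by (simp add: pos_less_divide_eq)
    then show ?thesis using that(2) by (simp add: abs_mult)
  qed
  have vb: "\<phi> x - b * \<psi> x = v x - (b - bz) * \<psi> x" for b x unfolding v_def by (simp add: algebra_simps)
  have pattern: "(\<phi> pa - b * \<psi> pa) * (\<phi> pb - b * \<psi> pb) < 0 \<and>
                 (\<phi> pb - b * \<psi> pb) * (\<phi> pc - b * \<psi> pc) < 0 \<and>
                 (\<phi> pc - b * \<psi> pc) * (\<phi> pd - b * \<psi> pd) < 0" if bb: "\<bar>b - bz\<bar> < \<epsilon>" for b
  proof -
    have s: "v pa * v pb < 0" "v pb * v pc < 0" "v pc * v pd < 0" using s12 s23 s34 unfolding v_def .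
    show ?thesis unfolding vb
      using sign_keep[OF s(1) small[OF bb \<psi>p(1) el(1)] small[OF bb \<psi>p(2) el(2)]]
            sign_keep[OF s(2) small[OF bb \<psi>p(2) el(2)] small[OF bb \<psi>p(3) el(3)]]
            sign_keep[OF s(3) small[OF bb \<psi>p(3) el(3)] small[OF bb \<psi>p(4) el(4)]]
      by blast
  qed
  define H where "H x = \<phi> x / \<psi> x" for x
  define SR where "SR = {z \<in> {pa..pd}. rflat H z}"
  define SL where "SL = {z \<in> {pa..pd}. lflat H z}"
  have negR: "negligible (H ` SR)" by (rule sard_right[of SR pa pd]) (auto simp: SR_def)
  have negL: "negligible (H ` SL)" by (rule sard_left[of SL pa pd]) (auto simp: SL_def)
  have "\<exists>b\<in>{bz - \<epsilon> <..< bz + \<epsilon>}. b \<notin> H ` SR \<union> H ` SL"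
  proof (rule ccontr)
    assume "\<not> ?thesis"
    then have "{bz - \<epsilon> <..< bz + \<epsilon>} \<subseteq> H ` SR \<union> H ` SL" by auto
    then have "negligible {bz - \<epsilon> <..< bz + \<epsilon>}" using negR negL negligible_Un negligible_subset by metis
    then have "negligible (box (bz - \<epsilon>) (bz + \<epsilon>))" by (simp add: box_real)
    then have "box (bz - \<epsilon>) (bz + \<epsilon>) = {}" using negligible_interval(2) by blast
    then show False using \<epsilon> by (simp add: box_real)
  qed
  then obtain b where b: "bz - \<epsilon> < b" "b < bz + \<epsilon>" "b \<notin> H ` SR" "b \<notin> H ` SL" by auto
  have bbz: "\<bar>b - bz\<bar> < \<epsilon>" using b by auto
  have bpos: "b > 0" using b(1) \<epsilon>_def by linarith
  define \<Delta> where "\<Delta> x = \<phi> x - b * \<psi> x" for x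
  have iso: "\<exists>\<delta>>0. \<forall>w. w \<noteq> z \<and> \<bar>w - z\<bar> < \<delta> \<longrightarrow> \<Delta> w \<noteq> 0"
    if z: "pa < z" "z < pd" "\<Delta> z = 0" for z
  proof -
    have pz: "\<psi> z > 0" using pos z by auto
    have Hz: "H z = b" using z(3) pz unfolding \<Delta>_def H_def by (simp add: field_simps)
    have z0: "0 < z" "z < D" using z ps by auto
    obtain La where La: "\<forall>e>0. \<exists>d>0. \<forall>w. z < w \<and> w < z + d \<longrightarrow> \<bar>\<phi> w - \<phi> z - La * (w - z)\<bar> \<le> e * (w - z)"
      using convex_right_deriv[OF v\<phi> z0] by blast
    obtain Lb where Lb: "\<forall>e>0. \<exists>d>0. \<forall>w. z < w \<and> w < z + d \<longrightarrow> \<bar>\<psi> w - \<psi> z - Lb * (w - z)\<bar> \<le> e * (w - z)"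
      using convex_right_deriv[OF v\<psi> z0] by blast
    obtain Lc where Lc: "\<forall>e>0. \<exists>d>0. \<forall>w. z - d < w \<and> w < z \<longrightarrow> \<bar>\<phi> w - \<phi> z - Lc * (w - z)\<bar> \<le> e * (z - w)"
      using convex_left_deriv[OF v\<phi> z0] by blast
    obtain Ld where Ld: "\<forall>e>0. \<exists>d>0. \<forall>w. z - d < w \<and> w < z \<longrightarrow> \<bar>\<psi> w - \<psi> z - Ld * (w - z)\<bar> \<le> e * (z - w)"
      using convex_left_deriv[OF v\<psi> z0] by blast
    have bz: "\<phi> z / \<psi> z = b" using Hz unfolding H_def .
    have R: "\<exists>d>0. \<forall>w. z < w \<and> w < z + d \<longrightarrow> \<Delta> w \<noteq> 0"
    proof (rule ccontr)
      assume "\<not> ?thesis"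
      then have acc: "\<forall>d>0. \<exists>w. z < w \<and> w < z + d \<and> \<phi> w - (\<phi> z / \<psi> z) * \<psi> w = 0"
        unfolding bz \<Delta>_def by blast
      have "rflat H z" unfolding H_def by (rule accum_rflat[OF La Lb pz acc])
      then have "z \<in> SR" unfolding SR_def using z by auto
      then show False using b(3) Hz by blast
    qed
    have L: "\<exists>d>0. \<forall>w. z - d < w \<and> w < z \<longrightarrow> \<Delta> w \<noteq> 0"
    proof (rule ccontr)
      assume "\<not> ?thesis"
      then have acc: "\<forall>d>0. \<exists>w. z - d < w \<and> w < z \<and> \<phi> w - (\<phi> z / \<psi> z) * \<psi> w = 0"
        unfolding bz \<Delta>_def by blast
      have "lflat H z" unfolding H_def by (rule accum_lflat[OF Lc Ld pz acc])
      then have "z \<in> SL" unfolding SL_def using z by auto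
      then show False using b(4) Hz by blast
    qed
    obtain d1 where d1: "d1 > 0" "\<And>w. z < w \<and> w < z + d1 \<Longrightarrow> \<Delta> w \<noteq> 0" using R by blast
    obtain d2 where d2: "d2 > 0" "\<And>w. z - d2 < w \<and> w < z \<Longrightarrow> \<Delta> w \<noteq> 0" using L by blast
    show ?thesis
    proof (intro exI[of _ "min d1 d2"] conjI allI impI)
      show "min d1 d2 > 0" using d1 d2 by simp
      fix w assume w: "w \<noteq> z \<and> \<bar>w - z\<bar> < min d1 d2"
      show "\<Delta> w \<noteq> 0"
      proof (cases "z < w")
        case True then show ?thesis using d1(2)[of w] w by auto
      next
        case False then show ?thesis using d2(2)[of w] w by auto
      qed
    qed
  qed
  have cont: "continuous_on {p..q} \<Delta>" if "0 \<le> p" "q \<le> D" for p q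
  proof -
    have "continuous_on {p..q} \<phi>" "continuous_on {p..q} \<psi>"
      using c\<phi> c\<psi> that by (auto intro: continuous_on_subset)
    then show ?thesis unfolding \<Delta>_def by (intro continuous_intros)
  qed
  have pat: "\<Delta> pa * \<Delta> pb < 0" "\<Delta> pb * \<Delta> pc < 0" "\<Delta> pc * \<Delta> pd < 0"
    using pattern[OF bbz] unfolding \<Delta>_def by auto
  have c12: "continuous_on {pa..pb} \<Delta>" "continuous_on {pb..pc} \<Delta>" "continuous_on {pc..pd} \<Delta>"
    using cont ps by auto
  have pp: "0 < pb" "0 < pc" "pb < D" "pc < D" using ps by auto
  have iso12: "\<exists>\<delta>>0. \<forall>w. w \<noteq> z \<and> \<bar>w - z\<bar> < \<delta> \<longrightarrow> \<Delta> w \<noteq> 0"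
    if "p < z" "z < q" "\<Delta> z = 0" "pa \<le> p" "q \<le> pd" for p q z
    using iso that by auto
  obtain z1 where z1: "pa < z1" "z1 < pb" "(z1, z1) \<in> sign_switches \<Delta> 0 D"
    using switch_exists[OF c12(1) ps(1) ps(2) pp(3) pat(1)] iso12[of pa _ pb] ps by auto
  obtain z2 where z2: "pb < z2" "z2 < pc" "(z2, z2) \<in> sign_switches \<Delta> 0 D"
    using switch_exists[OF c12(2) pp(1) ps(3) pp(4) pat(2)] iso12[of pb _ pc] ps by auto
  obtain z3 where z3: "pc < z3" "z3 < pd" "(z3, z3) \<in> sign_switches \<Delta> 0 D"
    using switch_exists[OF c12(3) pp(2) ps(4) ps(5) pat(3)] iso12[of pc _ pd] ps by auto
  have "3 \<le> num_sign_switches \<Delta> 0 D"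
    by (rule three_switches[OF z1(3) z2(3) z3(3)]) (use z1 z2 z3 in auto)
  then show ?thesis using bpos unfolding \<Delta>_def by blast
qed

lemma DbD:
  fixes f :: "real \<Rightarrow> real"
  assumes "f \<in> Dbreve"
  shows "continuous_on {0..1} f" "convex_on {0..1} f"
    "\<And>x y. x \<in> {0..1} \<Longrightarrow> y \<in> {0..1} \<Longrightarrow> x < y \<Longrightarrow> f y < f x"
    "\<And>x. x \<in> {0..1} \<Longrightarrow> 0 \<le> f x" "\<And>x. x \<in> {0..1} \<Longrightarrow> f x \<le> 1"
    "f 0 = 1" "f 1 = 0"
  using assms unfolding Dbreve_def by (auto simp: image_subset_iff)

lemma Db_pos: fixes f :: "real \<Rightarrow> real" shows "f \<in> Dbreve \<Longrightarrow> 0 \<le> x \<Longrightarrow> x < 1 \<Longrightarrow> f x > 0"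
  using DbD(3)[of f x 1] DbD(7)[of f] by auto

lemma Db_le: fixes f :: "real \<Rightarrow> real" shows "f \<in> Dbreve \<Longrightarrow> 0 \<le> x \<Longrightarrow> x \<le> y \<Longrightarrow> y \<le> 1 \<Longrightarrow> f y \<le> f x"
  using DbD(3)[of f x y] by (cases "x = y") auto

lemma stride_props:
  assumes f: "f \<in> Dbreve"
  shows "0 \<le> stride f" "stride f \<le> 1"
    "\<And>x. x \<in> {0..1} \<Longrightarrow> stride f - x \<le> stride f * f x"
    "\<And>\<alpha>. \<alpha> > stride f \<Longrightarrow> \<exists>x\<in>{0..1}. \<alpha> - x > \<alpha> * f x"
proof -
  define A where "A = {\<alpha>::real. \<alpha> \<ge> 0 \<and> (\<forall>x\<in>{0..1}. \<alpha> - x \<le> \<alpha> * f x)}"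
  have sA: "stride f = Sup A" unfolding stride_def A_def ..
  have f1: "f 1 = 0" using DbD[OF f] by simp
  have f0: "f 0 = 1" using DbD[OF f] by simp
  have fle: "f x \<le> 1" if "x \<in> {0..1}" for x using DbD(5)[OF f that] .
  have A0: "0 \<in> A" unfolding A_def using fle by auto
  have A1: "\<alpha> \<le> 1" if "\<alpha> \<in> A" for \<alpha>
  proof -
    have "\<alpha> - 1 \<le> \<alpha> * f 1" using that unfolding A_def by auto
    then show ?thesis using f1 by simp
  qed
  have ne: "A \<noteq> {}" using A0 by auto
  have bdd: "bdd_above A" by (rule bdd_aboveI[of _ 1]) (rule A1)
  show s0: "0 \<le> stride f" unfolding sA using A0 bdd by (rule cSup_upper)
  show "stride f \<le> 1" unfolding sA using ne A1 by (rule cSup_least)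
  show "stride f - x \<le> stride f * f x" if x: "x \<in> {0..1}" for x
  proof (cases "1 - f x \<le> 0")
    case True
    then have "stride f * (1 - f x) \<le> 0" using mult_nonneg_nonpos[OF s0 True] by simp
    then show ?thesis using x by (simp add: algebra_simps)
  next
    case False
    then have pos: "1 - f x > 0" by simp
    have "\<alpha> \<le> x / (1 - f x)" if "\<alpha> \<in> A" for \<alpha>
    proof -
      have "\<alpha> - x \<le> \<alpha> * f x" using that x unfolding A_def by auto
      then have "\<alpha> * (1 - f x) \<le> x" by (simp add: algebra_simps)
      then show ?thesis using pos by (simp add: pos_le_divide_eq)
    qed
    then have "stride f \<le> x / (1 - f x)" unfolding sA using ne by (intro cSup_least) auto
    then have "stride f * (1 - f x) \<le> x" using pos by (simp add: pos_le_divide_eq)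
    then show ?thesis by (simp add: algebra_simps)
  qed
  show "\<exists>x\<in>{0..1}. \<alpha> - x > \<alpha> * f x" if "\<alpha> > stride f" for \<alpha>
  proof (rule ccontr)
    assume "\<not> ?thesis"
    then have "\<alpha> \<in> A" unfolding A_def using that s0 by (auto simp: not_less)
    then have "\<alpha> \<le> stride f" unfolding sA using bdd by (rule cSup_upper)
    then show False using that by simp
  qed
qed

lemma stride_mono:
  fixes f g :: "real \<Rightarrow> real"
  assumes f: "f \<in> Dbreve" and g: "g \<in> Dbreve" and le: "\<forall>x\<in>{0..1}. g x \<le> f x"
  shows "stride g \<le> stride f"
proof -
  define A where "A h = {\<alpha>::real. \<alpha> \<ge> 0 \<and> (\<forall>x\<in>{0..1::real}. \<alpha> - x \<le> \<alpha> * h x)}" for h :: "real \<Rightarrow> real"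
  have sA: "stride h = Sup (A h)" for h unfolding stride_def A_def ..
  have sub: "A g \<subseteq> A f"
  proof
    fix \<alpha> assume "\<alpha> \<in> A g"
    then have a: "\<alpha> \<ge> 0" "\<forall>x\<in>{0..1}. \<alpha> - x \<le> \<alpha> * g x" unfolding A_def by auto
    have "\<forall>x\<in>{0..1}. \<alpha> - x \<le> \<alpha> * f x"
    proof
      fix x :: real assume x: "x \<in> {0..1}"
      have "\<alpha> * g x \<le> \<alpha> * f x" using le x a(1) by (simp add: mult_left_mono)
      then show "\<alpha> - x \<le> \<alpha> * f x" using a(2) x by force
    qed
    then show "\<alpha> \<in> A f" using a(1) unfolding A_def by auto
  qed
  have "0 \<in> A g" unfolding A_def using DbD(5)[OF g] by auto
  moreover have "bdd_above (A f)"
  proof (rule bdd_aboveI[of _ 1])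
    fix \<alpha> assume "\<alpha> \<in> A f"
    then have "\<alpha> - 1 \<le> \<alpha> * f 1" unfolding A_def by auto
    then show "\<alpha> \<le> 1" using DbD(7)[OF f] by simp
  qed
  ultimately show ?thesis unfolding sA by (intro cSup_subset_mono sub) auto
qed

lemma ratio_mono:
  fixes f :: "real \<Rightarrow> real"
  assumes f: "f \<in> Dbreve" and "0 < x'" "x' \<le> x" "x \<le> 1"
  shows "x' * (1 - f x) \<le> x * (1 - f x')"
proof -
  have cv: "convex_on {0..x} f" by (rule convex_on_subset[OF DbD(2)[OF f]]) (use assms in auto)
  have "f x' \<le> (f x - f 0) / (x - 0) * (x' - 0) + f 0"
    using convex_onD_Icc'[OF cv, of x'] assms by auto
  then have "f x' \<le> (f x - 1) / x * x' + 1" using DbD(6)[OF f] by simp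
  then have "x * f x' \<le> (f x - 1) * x' + x" using assms by (simp add: field_simps)
  then show ?thesis by (simp add: algebra_simps)
qed

lemma convex_scale:
  fixes f :: "real \<Rightarrow> real" and a :: real
  assumes cv: "convex_on {0..1} f" and a: "a > 0"
  shows "convex_on {0..1/a} (\<lambda>x. f (a * x))"
proof (rule convex_on_linorderI[where f = "\<lambda>x. f (a * x)"])
  fix t x y :: real assume t: "0 < t" "t < 1" and x: "x \<in> {0..1/a}" and y: "y \<in> {0..1/a}" and "x < y"
  have ax: "a * x \<in> {0..1}" "a * y \<in> {0..1}" using x y a by (auto simp: field_simps)
  have "f ((1 - t) *\<^sub>R (a * x) + t *\<^sub>R (a * y)) \<le> (1 - t) * f (a * x) + t * f (a * y)"
    using convex_onD[OF cv, of t "a * x" "a * y"] t ax by auto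
  moreover have "(1 - t) *\<^sub>R (a * x) + t *\<^sub>R (a * y) = a * ((1 - t) *\<^sub>R x + t *\<^sub>R y)"
    by (simp add: algebra_simps)
  ultimately show "f (a * ((1 - t) *\<^sub>R x + t *\<^sub>R y)) \<le> (1 - t) * f (a * x) + t * f (a * y)" by simp
qed simp

lemma cont_scale:
  fixes f :: "real \<Rightarrow> real" and a :: real
  assumes c: "continuous_on {0..1} f" and a: "a > 0"
  shows "continuous_on {0..1/a} (\<lambda>x. f (a * x))"
proof (rule continuous_on_compose2[OF c])
  show "continuous_on {0..1/a} (\<lambda>x. a * x)" by (intro continuous_intros)
  show "(\<lambda>x. a * x) ` {0..1/a} \<subseteq> {0..1}" using a by (auto simp: field_simps)
qed

lemma cn_three:
  fixes f g :: "real \<Rightarrow> real"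
  assumes "a > 0" "b > 0" "3 \<le> num_sign_switches (\<lambda>x. f (a * x) - b * g x) 0 (min 1 (1 / a))"
  shows "crossing_number f g \<noteq> 2"
proof -
  have A: "num_sign_switches (\<lambda>x. f (a * x) - b * g x) 0 (min 1 (1 / a))
        \<le> (SUP b\<in>{0<..}. num_sign_switches (\<lambda>x. f (a * x) - b * g x) 0 (min 1 (1 / a)))"
    using assms(2) by (intro SUP_upper) auto
  have B: "(SUP b\<in>{0<..}. num_sign_switches (\<lambda>x. f (a * x) - b * g x) 0 (min 1 (1 / a))) \<le> crossing_number f g"
    unfolding crossing_number_def
    using assms(1) by (intro SUP_upper[where f = "\<lambda>a. SUP b\<in>{0<..}. num_sign_switches (\<lambda>x. f (a * x) - b * g x) 0 (min 1 (1 / a))"]) auto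
  have "3 \<le> crossing_number f g" using assms(3) A B by (meson order_trans)
  then show ?thesis by (auto simp: numeral_eq_enat)
qed

lemma cont_near:
  fixes h :: "real \<Rightarrow> real"
  assumes "continuous_on S h" "y \<in> S" "h y > 0"
  shows "\<exists>\<eta>>0. \<forall>x\<in>S. \<bar>x - y\<bar> < \<eta> \<longrightarrow> h x > 0"
proof -
  obtain \<eta> where "\<eta> > 0" "\<forall>x\<in>S. dist x y < \<eta> \<longrightarrow> dist (h x) (h y) < h y"
    using assms unfolding continuous_on_iff by blast
  then show ?thesis by (intro exI[of _ \<eta>]) (auto simp: dist_real_def)
qed

lemma part1:
  fixes f g :: "real \<Rightarrow> real"
  assumes f: "f \<in> Dbreve" and g: "g \<in> Dbreve"
    and dom: "dominated g f"
    and sg: "stride g > 0"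
  shows "\<forall>x\<in>{0..1 / stride f}. f (stride f * x) \<le> g (stride g * x)"
proof (rule ccontr)
  assume "\<not> ?thesis"
  then obtain x0 where x0: "x0 \<in> {0..1 / stride f}" and bad: "f (stride f * x0) > g (stride g * x0)"
    by (auto simp: not_le)
  define sf where "sf = stride f"
  define sg' where "sg' = stride g"
  have le: "\<forall>x\<in>{0..1}. g x \<le> f x" using dom unfolding dominated_def by auto
  have cn: "crossing_number f g = 2" using dom unfolding dominated_def by auto
  have sgf: "sg' \<le> sf" unfolding sf_def sg'_def by (rule stride_mono[OF f g le])
  have sg0: "sg' > 0" using sg unfolding sg'_def .
  have sf0: "sf > 0" using sgf sg0 by simp
  have sf1: "sf \<le> 1" unfolding sf_def using stride_props(2)[OF f] .
  have sg1: "sg' \<le> 1" unfolding sg'_def using stride_props(2)[OF g] .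
  have strg: "sg' - x \<le> sg' * g x" if "x \<in> {0..1}" for x
    unfolding sg'_def using stride_props(3)[OF g that] .
  define s0 where "s0 = sf * x0"
  define t0 where "t0 = sg' * x0"
  have x0pos: "0 \<le> x0" "x0 \<le> 1 / sf" using x0 unfolding sf_def by auto
  have s01: "0 \<le> s0" "s0 \<le> 1" unfolding s0_def using x0pos sf0 by (auto simp: field_simps)
  have t0s0: "t0 \<le> s0" unfolding t0_def s0_def using sgf x0pos by (simp add: mult_right_mono)
  have t0nn: "0 \<le> t0" unfolding t0_def using sg0 x0pos by simp
  have bad': "f s0 > g t0" using bad unfolding s0_def t0_def sf_def sg'_def .
  have "x0 \<noteq> 0"
  proof
    assume "x0 = 0" then have "s0 = 0" "t0 = 0" unfolding s0_def t0_def by auto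
    then show False using bad' DbD(6)[OF f] DbD(6)[OF g] by simp
  qed
  then have x0p: "x0 > 0" using x0pos by simp
  have t0p: "t0 > 0" unfolding t0_def using sg0 x0p by simp
  have s0p: "s0 > 0" using t0p t0s0 by simp
  have s0l1: "s0 < 1"
  proof (rule ccontr)
    assume "\<not> s0 < 1" then have "s0 = 1" using s01 by simp
    then have "f s0 = 0" using DbD(7)[OF f] by simp
    moreover have "g t0 \<ge> 0" using DbD(4)[OF g, of t0] t0nn t0s0 s01 by simp
    ultimately show False using bad' by simp
  qed
  have "\<exists>\<eta>>0. \<forall>y\<in>{0..1}. \<bar>y - s0\<bar> < \<eta> \<longrightarrow> f y - g t0 > 0"
    by (rule cont_near) (use DbD(1)[OF f] s01 bad' in \<open>auto intro!: continuous_intros\<close>)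
  then obtain \<eta> where \<eta>: "\<eta> > 0" "\<And>y. y \<in> {0..1} \<Longrightarrow> \<bar>y - s0\<bar> < \<eta> \<Longrightarrow> f y > g t0" by auto
  define c where "c = 1 + min \<eta> (1 - s0) / (2 * s0)"
  have mpos: "min \<eta> (1 - s0) > 0" using \<eta>(1) s0l1 by simp
  have c1: "c > 1" unfolding c_def using mpos s0p by simp
  have cs0: "c * s0 = s0 + min \<eta> (1 - s0) / 2" unfolding c_def using s0p by (simp add: field_simps)
  have cs0l: "c * s0 < 1"
  proof -
    define M where "M = min \<eta> (1 - s0)"
    have "M \<le> 1 - s0" unfolding M_def by simp
    then have "s0 + M / 2 < 1" using s0l1 by linarith
    then show ?thesis unfolding cs0 M_def .
  qed
  have fcs0: "f (c * s0) > g t0"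
  proof (rule \<eta>(2))
    show "c * s0 \<in> {0..1}" using cs0l s0p c1 by simp
    show "\<bar>c * s0 - s0\<bar> < \<eta>"
    proof -
      define M where "M = min \<eta> (1 - s0)"
      have "M \<le> \<eta>" "M > 0" using mpos unfolding M_def by simp_all
      then have "\<bar>s0 + M / 2 - s0\<bar> < \<eta>" by simp
      then show ?thesis unfolding cs0 M_def .
    qed
  qed
  define a where "a = c * sf / sg'"
  have a1: "a > 1"
  proof -
    have "sf / sg' \<ge> 1" using sgf sg0 by simp
    then have "c * (sf / sg') \<ge> c * 1" using c1 by (intro mult_left_mono) auto
    then have "c * (sf / sg') > 1" using c1 by linarith
    then show ?thesis unfolding a_def by simp
  qed
  have a0: "a > 0" using a1 by simp
  have at0: "a * t0 = c * s0" unfolding a_def t0_def s0_def using sg0 by (simp add: field_simps)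
  have t0a: "t0 < 1 / a" using at0 cs0l a0 by (simp add: field_simps)
  have Dm: "min 1 (1 / a) = 1 / a" using a1 by simp
  have ia1: "1 / a < 1" using a1 by simp
  obtain x where x: "x \<in> {0..1}" "sf * c - x > sf * c * f x"
    using stride_props(4)[OF f, of "sf * c"] c1 sf0 unfolding sf_def by auto
  have xp: "x > 0"
  proof (rule ccontr)
    assume "\<not> x > 0" then have "x = 0" using x(1) by simp
    then show False using x(2) DbD(6)[OF f] by simp
  qed
  define x' where "x' = min x (c * s0 / 2)"
  have x'p: "x' > 0" unfolding x'_def using xp c1 s0p by simp
  have x'x: "x' \<le> x" unfolding x'_def by simp
  have x'1: "x' \<le> 1" using x'x x(1) by simp
  have rm: "x' * (1 - f x) \<le> x * (1 - f x')" by (rule ratio_mono[OF f x'p x'x]) (use x in auto)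
  have al: "sf * c > 0" using sf0 c1 by simp
  have "x < sf * c * (1 - f x)" using x(2) by (simp add: algebra_simps)
  then have "x * x' < sf * c * (1 - f x) * x'" using x'p by (simp add: mult_strict_right_mono)
  also have "\<dots> = sf * c * (x' * (1 - f x))" by (simp add: algebra_simps)
  also have "\<dots> \<le> sf * c * (x * (1 - f x'))" using rm al by (simp add: mult_left_mono)
  finally have "x * x' < x * (sf * c * (1 - f x'))" by (simp add: algebra_simps)
  then have fx'1: "x' < sf * c * (1 - f x')" using xp by simp
  define p2 where "p2 = x' / a"
  have p2p: "p2 > 0" unfolding p2_def using x'p a0 by simp
  have ap2: "a * p2 = x'" unfolding p2_def using a0 by simp
  have p2t0: "p2 < t0"
  proof -
    have "x' < c * s0" unfolding x'_def using c1 s0p by (simp add: min_less_iff_disj)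
    then have "a * p2 < a * t0" using ap2 at0 by simp
    then show ?thesis using a0 by simp
  qed
  have phip2: "f (a * p2) < g p2"
  proof -
    have st: "sg' - p2 \<le> sg' * g p2" using strg[of p2] p2p p2t0 t0a ia1 by simp
    have "sg' * (1 - p2 / sg') = sg' - p2" using sg0 by (simp add: field_simps)
    then have "sg' * (1 - p2 / sg') \<le> sg' * g p2" using st by simp
    then have A: "1 - p2 / sg' \<le> g p2" using sg0 by (rule mult_left_le_imp_le)
    have B: "x' = sf * c * (p2 / sg')" using ap2 unfolding a_def using sg0 by (simp add: field_simps)
    have C: "sf * c * (p2 / sg') < sf * c * (1 - f x')" using fx'1 B by simp
    have "p2 / sg' < 1 - f x'" using mult_less_cancel_left_pos[OF al] C by blast
    then show ?thesis using ap2 A by simp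
  qed
  have g_ia: "g (1 / a) > 0" using Db_pos[OF g] a0 ia1 by simp
  have "\<exists>\<eta>>0. \<forall>y\<in>{0..1/a}. \<bar>y - 1 / a\<bar> < \<eta> \<longrightarrow> - (f (a * y) - g y) > 0"
  proof (rule cont_near)
    have "continuous_on {0..1/a} (\<lambda>y. f (a * y))" by (rule cont_scale[OF DbD(1)[OF f] a0])
    moreover have "continuous_on {0..1/a} g" by (rule continuous_on_subset[OF DbD(1)[OF g]]) (use ia1 in auto)
    ultimately show "continuous_on {0..1/a} (\<lambda>y. - (f (a * y) - g y))" by (intro continuous_intros)
    show "1 / a \<in> {0..1/a}" using a0 by simp
    show "- (f (a * (1 / a)) - g (1 / a)) > 0" using a0 g_ia DbD(7)[OF f] by simp
  qed
  then obtain \<eta>2 where \<eta>2: "\<eta>2 > 0" "\<And>y. y \<in> {0..1/a} \<Longrightarrow> \<bar>y - 1 / a\<bar> < \<eta>2 \<Longrightarrow> f (a * y) < g y"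
    by force
  define p4 where "p4 = max (t0 + (1 / a - t0) / 2) (1 / a - \<eta>2 / 2)"
  have p4: "t0 < p4" "p4 < 1 / a"
  proof -
    have h: "t < t + (u - t) / 2" "t + (u - t) / 2 < u" "u - e / 2 < u" if "t < u" "e > 0" for t u e :: real
      using that by (auto simp: field_simps)
    show "t0 < p4" unfolding p4_def using h(1)[OF t0a \<eta>2(1)] by (simp add: less_max_iff_disj)
    show "p4 < 1 / a" unfolding p4_def using h(2,3)[OF t0a \<eta>2(1)] by simp
  qed
  have phip4: "f (a * p4) < g p4"
    by (rule \<eta>2(2)) (use p4 t0nn \<eta>2(1) in \<open>auto simp: p4_def\<close>)
  have gp: "g y > 0" if "0 \<le> y" "y \<le> 1 / a" for y using Db_pos[OF g] that ia1 by simp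
  have fa_nn: "f (a * y) \<ge> 0" if "0 \<le> y" "y \<le> 1 / a" for y
    using DbD(4)[OF f, of "a * y"] that a0 by (simp add: field_simps)
  define m where "m = max (f (a * p2) / g p2) (f (a * p4) / g p4)"
  have gp2: "g p2 > 0" using gp[of p2] p2p p2t0 t0a by simp
  have gp4: "g p4 > 0" using gp[of p4] p4 t0nn by simp
  have r2: "f (a * p2) / g p2 < 1" using phip2 gp2 by simp
  have r4: "f (a * p4) / g p4 < 1" using phip4 gp4 by simp
  have m1: "m < 1" unfolding m_def using r2 r4 by simp
  have m0: "m \<ge> 0"
  proof -
    have "0 \<le> f (a * p2)" using fa_nn[of p2] p2p p2t0 t0a by simp
    then have "0 \<le> f (a * p2) / g p2" using gp2 by simp
    then show ?thesis unfolding m_def by (simp add: le_max_iff_disj)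
  qed
  define b0 where "b0 = (1 + m) / 2"
  have b0: "b0 > 0" "b0 < 1" "m < b0" unfolding b0_def using m0 m1 by auto
  have D2: "f (a * p2) - b0 * g p2 < 0"
  proof -
    have "f (a * p2) / g p2 < b0" using b0(3) unfolding m_def by simp
    then show ?thesis using gp2 by (simp add: divide_less_eq)
  qed
  have D4: "f (a * p4) - b0 * g p4 < 0"
  proof -
    have "f (a * p4) / g p4 < b0" using b0(3) unfolding m_def by simp
    then show ?thesis using gp4 by (simp add: divide_less_eq)
  qed
  have D3: "f (a * t0) - b0 * g t0 > 0"
  proof -
    have "b0 * g t0 \<le> g t0" using b0 gp[of t0] t0nn t0a by simp
    then show ?thesis using fcs0 at0 by simp
  qed
  have "\<exists>\<eta>>0. \<forall>y\<in>{0..1/a}. \<bar>y - 0\<bar> < \<eta> \<longrightarrow> f (a * y) - b0 * g y > 0"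
  proof (rule cont_near)
    have "continuous_on {0..1/a} (\<lambda>y. f (a * y))" by (rule cont_scale[OF DbD(1)[OF f] a0])
    moreover have "continuous_on {0..1/a} g" by (rule continuous_on_subset[OF DbD(1)[OF g]]) (use ia1 in auto)
    ultimately show "continuous_on {0..1/a} (\<lambda>y. f (a * y) - b0 * g y)" by (intro continuous_intros)
    show "0 \<in> {0..1/a}" using a0 by simp
    show "f (a * 0) - b0 * g 0 > 0" using b0 DbD(6)[OF f] DbD(6)[OF g] by simp
  qed
  then obtain \<eta>3 where \<eta>3: "\<eta>3 > 0" "\<And>y. y \<in> {0..1/a} \<Longrightarrow> \<bar>y - 0\<bar> < \<eta>3 \<Longrightarrow> f (a * y) - b0 * g y > 0"
    by force
  define p1 where "p1 = min (\<eta>3 / 2) (p2 / 2)"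
  have p1: "0 < p1" "p1 < p2" unfolding p1_def using \<eta>3(1) p2p by auto
  have D1: "f (a * p1) - b0 * g p1 > 0"
    by (rule \<eta>3(2)) (use p1 p2t0 t0a \<eta>3(1) in \<open>auto simp: p1_def\<close>)
  have "\<exists>b>0. 3 \<le> num_sign_switches (\<lambda>x. f (a * x) - b * g x) 0 (1 / a)"
  proof (rule key_three[where pa = p1 and pb = p2 and pc = t0 and pd = p4 and bz = b0])
    show "continuous_on {0..1/a} (\<lambda>y. f (a * y))" by (rule cont_scale[OF DbD(1)[OF f] a0])
    show "continuous_on {0..1/a} g" by (rule continuous_on_subset[OF DbD(1)[OF g]]) (use ia1 in auto)
    show "convex_on {0..1/a} (\<lambda>y. f (a * y))" by (rule convex_scale[OF DbD(2)[OF f] a0])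
    show "convex_on {0..1/a} g" by (rule convex_on_subset[OF DbD(2)[OF g]]) (use ia1 in auto)
    show "0 < p1" "p1 < p2" "p2 < t0" "t0 < p4" "p4 < 1 / a" using p1 p2t0 p4 by auto
    show "\<And>x. p1 \<le> x \<Longrightarrow> x \<le> p4 \<Longrightarrow> 0 < g x" using gp p1 p4 by auto
    show "0 < b0" using b0 by simp
    show "(f (a * p1) - b0 * g p1) * (f (a * p2) - b0 * g p2) < 0" using D1 D2 by (simp add: mult_pos_neg)
    show "(f (a * p2) - b0 * g p2) * (f (a * t0) - b0 * g t0) < 0" using D2 D3 by (simp add: mult_neg_pos)
    show "(f (a * t0) - b0 * g t0) * (f (a * p4) - b0 * g p4) < 0" using D3 D4 by (simp add: mult_pos_neg)
  qed
  then obtain b where "b > 0" "3 \<le> num_sign_switches (\<lambda>x. f (a * x) - b * g x) 0 (min 1 (1 / a))"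
    unfolding Dm by blast
  then have "crossing_number f g \<noteq> 2" using cn_three[OF a0] by blast
  then show False using cn by simp
qed

lemma switchD:
  assumes "(c, d) \<in> sign_switches \<Delta> c0 d0"
  shows "c0 < c" "c \<le> d" "d < d0" "\<And>y. c \<le> y \<Longrightarrow> y \<le> d \<Longrightarrow> \<Delta> y = 0"
    "\<exists>\<delta>>0. \<delta> \<le> c - c0 \<and> \<delta> \<le> d0 - d \<and> (\<forall>x. 0 < x \<and> x \<le> \<delta> \<longrightarrow> \<Delta> (c - x) * \<Delta> (d + x) < 0)"
proof -
  have A: "c0 < c \<and> c \<le> d \<and> d < d0 \<and> \<Delta> ` {c..d} = {0} \<and>
      (\<exists>\<delta>. 0 < \<delta> \<and> \<delta> \<le> min (c - c0) (d0 - d) \<and> (\<forall>x\<in>{0<..\<delta>}. \<Delta> (c - x) * \<Delta> (d + x) < 0))"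
    using assms unfolding sign_switches_def by simp
  then show "c0 < c" "c \<le> d" "d < d0" by auto
  show "\<Delta> y = 0" if "c \<le> y" "y \<le> d" for y
  proof -
    have "\<Delta> y \<in> \<Delta> ` {c..d}" using that by auto
    then show ?thesis using A by simp
  qed
  show "\<exists>\<delta>>0. \<delta> \<le> c - c0 \<and> \<delta> \<le> d0 - d \<and> (\<forall>x. 0 < x \<and> x \<le> \<delta> \<longrightarrow> \<Delta> (c - x) * \<Delta> (d + x) < 0)"
    using A by auto
qed

lemma switch_witness:
  assumes "(c, d) \<in> sign_switches \<Delta> c0 d0"
  shows "\<exists>u v. c0 \<le> u \<and> u \<le> v \<and> v \<le> d0 \<and> \<Delta> u * \<Delta> v < 0"
proof -
  obtain \<delta> where "\<delta> > 0" "\<delta> \<le> c - c0" "\<delta> \<le> d0 - d" "\<Delta> (c - \<delta>) * \<Delta> (d + \<delta>) < 0"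
    using switchD(5)[OF assms] by auto
  then show ?thesis using switchD(2)[OF assms] by (intro exI[of _ "c - \<delta>"] exI[of _ "d + \<delta>"]) auto
qed

lemma switch_overlap1:
  assumes s1: "(c1, d1) \<in> sign_switches \<Delta> c0 d0" and s2: "(c2, d2) \<in> sign_switches \<Delta> c0 d0"
    and "c1 < c2" "c2 \<le> d1"
  shows False
proof -
  obtain \<delta> where \<delta>: "\<delta> > 0" "\<And>x. 0 < x \<and> x \<le> \<delta> \<Longrightarrow> \<Delta> (c2 - x) * \<Delta> (d2 + x) < 0"
    using switchD(5)[OF s2] by auto
  define x where "x = min \<delta> (c2 - c1)"
  have x: "0 < x" "x \<le> \<delta>" unfolding x_def using \<delta> assms(3) by auto
  have "\<Delta> (c2 - x) = 0" using switchD(4)[OF s1, of "c2 - x"] x assms(3,4) unfolding x_def by auto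
  then show False using \<delta>(2)[OF conjI[OF x]] by simp
qed

lemma switch_overlap2:
  assumes s1: "(c1, d1) \<in> sign_switches \<Delta> c0 d0" and s2: "(c2, d2) \<in> sign_switches \<Delta> c0 d0"
    and "c1 = c2" "d1 < d2"
  shows False
proof -
  obtain \<delta> where \<delta>: "\<delta> > 0" "\<And>x. 0 < x \<and> x \<le> \<delta> \<Longrightarrow> \<Delta> (c1 - x) * \<Delta> (d1 + x) < 0"
    using switchD(5)[OF s1] by auto
  define x where "x = min \<delta> (d2 - d1)"
  have x: "0 < x" "x \<le> \<delta>" unfolding x_def using \<delta> assms(4) by auto
  have "c1 \<le> d1" using switchD(2)[OF s1] .
  then have "\<Delta> (d1 + x) = 0" using switchD(4)[OF s2, of "d1 + x"] x assms(3,4) unfolding x_def by auto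
  then show False using \<delta>(2)[OF conjI[OF x]] by simp
qed

lemma switches_ordered:
  assumes s1: "(c1, d1) \<in> sign_switches \<Delta> c0 d0" and s2: "(c2, d2) \<in> sign_switches \<Delta> c0 d0"
    and ne: "(c1, d1) \<noteq> (c2, d2)"
  shows "d1 < c2 \<or> d2 < c1"
proof (rule ccontr)
  assume "\<not> ?thesis"
  then have h: "c2 \<le> d1" "c1 \<le> d2" by auto
  consider "c1 < c2" | "c2 < c1" | "c1 = c2" by linarith
  then show False
  proof cases
    case 1 then show ?thesis using switch_overlap1[OF s1 s2 _ h(1)] by simp
  next
    case 2 then show ?thesis using switch_overlap1[OF s2 s1 _ h(2)] by simp
  next
    case 3
    then have "d1 \<noteq> d2" using ne by auto
    then consider "d1 < d2" | "d2 < d1" by linarith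
    then show ?thesis
    proof cases
      case 1 then show ?thesis using switch_overlap2[OF s1 s2 3] by simp
    next
      case 2 then show ?thesis using switch_overlap2[OF s2 s1 3[symmetric]] by simp
    qed
  qed
qed

lemma sgn_a: "(a::real) * b < 0 \<Longrightarrow> a * c > 0 \<Longrightarrow> b * c < 0"
  by (auto simp: mult_less_0_iff zero_less_mult_iff)
lemma sgn_b: "(a::real) * b < 0 \<Longrightarrow> a * c < 0 \<Longrightarrow> b * c > 0"
  by (auto simp: mult_less_0_iff zero_less_mult_iff)
lemma sgn_c: "(a::real) * c > 0 \<Longrightarrow> b * d > 0 \<Longrightarrow> c * d < 0 \<Longrightarrow> a * b < 0"
  by (auto simp: mult_less_0_iff zero_less_mult_iff)

lemma alt6:
  fixes \<Delta> :: "real \<Rightarrow> real"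
  assumes o: "x0 < x1" "x1 < x2" "x2 < x3" "x3 < x4" "x4 < x5"
    and s: "\<Delta> x1 * \<Delta> x2 < 0" "\<Delta> x3 * \<Delta> x4 < 0" "\<Delta> x0 * \<Delta> x5 < 0"
  shows "\<exists>p1 p2 p3 p4. x0 \<le> p1 \<and> p1 < p2 \<and> p2 < p3 \<and> p3 < p4 \<and> p4 \<le> x5 \<and>
           \<Delta> p1 * \<Delta> p2 < 0 \<and> \<Delta> p2 * \<Delta> p3 < 0 \<and> \<Delta> p3 * \<Delta> p4 < 0"
proof -
  have nz: "\<Delta> x0 \<noteq> 0" "\<Delta> x1 \<noteq> 0" "\<Delta> x3 \<noteq> 0" using s by auto
  show ?thesis
  proof (cases "\<Delta> x1 * \<Delta> x3 > 0")
    case True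
    have "\<Delta> x2 * \<Delta> x3 < 0" using sgn_a[OF s(1) True] .
    then show ?thesis using o s by (intro exI[of _ x1] exI[of _ x2] exI[of _ x3] exI[of _ x4]) auto
  next
    case False
    then have n13: "\<Delta> x1 * \<Delta> x3 < 0" using nz by (simp add: not_less le_less mult_eq_0_iff)
    have p14: "\<Delta> x1 * \<Delta> x4 > 0"
    proof -
      have "\<Delta> x3 * \<Delta> x1 < 0" using n13 by (simp add: mult.commute)
      from sgn_b[OF this s(2)] show ?thesis by (simp add: mult.commute)
    qed
    have n24: "\<Delta> x2 * \<Delta> x4 < 0" using sgn_a[OF s(1) p14] .
    show ?thesis
    proof (cases "\<Delta> x0 * \<Delta> x1 > 0")
      case True
      have n15: "\<Delta> x1 * \<Delta> x5 < 0" using sgn_a[OF s(3) True] by (simp add: mult.commute)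
      have "\<Delta> x4 * \<Delta> x5 < 0" using sgn_a[OF n15 p14] by (simp add: mult.commute)
      then show ?thesis using o s n24 by (intro exI[of _ x1] exI[of _ x2] exI[of _ x4] exI[of _ x5]) auto
    next
      case False
      then have "\<Delta> x0 * \<Delta> x1 < 0" using nz by (simp add: not_less le_less mult_eq_0_iff)
      then show ?thesis using o s n24 by (intro exI[of _ x0] exI[of _ x1] exI[of _ x2] exI[of _ x4]) auto
    qed
  qed
qed

lemma enat_lt2: "\<not> 2 \<le> (x::enat) \<Longrightarrow> x \<le> 1"
  by (cases x) (auto simp: numeral_eq_enat one_enat_def)

lemma no_equal:
  fixes f g :: "real \<Rightarrow> real"
  assumes f: "f \<in> Dbreve" and g: "g \<in> Dbreve" and eq: "\<forall>x\<in>{0..1}. f x = g x"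
    and cn: "crossing_number f g = 2"
  shows False
proof -
  have "\<exists>a>0. \<exists>b>0. 2 \<le> num_sign_switches (\<lambda>x. f (a * x) - b * g x) 0 (min 1 (1 / a))"
  proof (rule ccontr)
    assume "\<not> ?thesis"
    then have "num_sign_switches (\<lambda>x. f (a * x) - b * g x) 0 (min 1 (1 / a)) \<le> 1"
      if "a > 0" "b > 0" for a b using that enat_lt2 by blast
    then have "crossing_number f g \<le> 1" unfolding crossing_number_def
      by (intro SUP_least) auto
    then show False using cn by (simp add: numeral_eq_enat one_enat_def)
  qed
  then obtain a b where a: "a > 0" and b: "b > 0"
    and two: "2 \<le> num_sign_switches (\<lambda>x. f (a * x) - b * g x) 0 (min 1 (1 / a))" by blast
  define D where "D = min 1 (1 / a)"
  define \<Delta> where "\<Delta> x = f (a * x) - b * g x" for x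
  define S where "S = sign_switches \<Delta> 0 D"
  have "\<exists>T. finite T \<and> card T = 2 \<and> T \<subseteq> S"
  proof (cases "finite S")
    case True
    then have "2 \<le> card S" using two unfolding num_sign_switches_def S_def \<Delta>_def D_def
      by (simp add: numeral_eq_enat)
    then show ?thesis by (metis obtain_subset_with_card_n)
  next
    case False
    then show ?thesis using infinite_arbitrarily_large by blast
  qed
  then obtain s1 s2 where s12: "s1 \<in> S" "s2 \<in> S" "s1 \<noteq> s2"
    by (auto simp: card_2_iff)
  obtain c1 d1 where cd1: "s1 = (c1, d1)" by (cases s1)
  obtain c2 d2 where cd2: "s2 = (c2, d2)" by (cases s2)
  have sw1: "(c1, d1) \<in> sign_switches \<Delta> 0 D" using s12 cd1 unfolding S_def by simp
  have sw2: "(c2, d2) \<in> sign_switches \<Delta> 0 D" using s12 cd2 unfolding S_def by simp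
  have D0: "D > 0" unfolding D_def using a by simp
  have D1: "D \<le> 1" unfolding D_def by simp
  have Da: "D \<le> 1 / a" unfolding D_def by simp
  have gnn: "g y \<ge> 0" if "0 \<le> y" "y \<le> 1" for y using DbD(4)[OF g] that by simp
  obtain u v where uv: "0 \<le> u" "u \<le> v" "v \<le> D" "\<Delta> u * \<Delta> v < 0"
    using switch_witness[OF sw1] by blast
  have ends: "\<Delta> 0 * \<Delta> D < 0"
  proof -
    consider "a = 1" | "a > 1" | "a < 1" by linarith
    then show ?thesis
    proof cases
      case 1
      have Dy: "\<Delta> y = (1 - b) * g y" if "0 \<le> y" "y \<le> 1" for y
        unfolding \<Delta>_def using eq that 1 by (simp add: algebra_simps)
      have "\<Delta> u * \<Delta> v = ((1 - b) * g u) * ((1 - b) * g v)" using Dy[of u] Dy[of v] uv D1 by simp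
      also have "\<dots> = (1 - b)^2 * (g u * g v)" by (simp add: power2_eq_square algebra_simps)
      finally have "\<Delta> u * \<Delta> v = (1 - b)^2 * (g u * g v)" .
      moreover have "(1 - b)^2 * (g u * g v) \<ge> 0" using gnn[of u] gnn[of v] uv D1 by simp
      ultimately show ?thesis using uv(4) by simp
    next
      case 2
      have DD: "D = 1 / a" unfolding D_def using 2 by simp
      have b1: "b < 1"
      proof (rule ccontr)
        assume "\<not> b < 1"
        have np: "\<Delta> y \<le> 0" if "0 \<le> y" "y \<le> D" for y
        proof -
          have "y \<le> a * y" using that 2 mult_right_mono[of 1 a y] by simp
          moreover have "a * y \<le> 1" using that 2 DD by (auto simp: field_simps)
          ultimately have "y \<le> a * y" "a * y \<le> 1" by auto
          then have "f (a * y) \<le> f y" using Db_le[OF f, of y "a * y"] that by simp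
          also have "f y = g y" using eq that D1 by simp
          also have "g y \<le> b * g y" using \<open>\<not> b < 1\<close> gnn[of y] that D1 by (simp add: mult_right_mono[of 1 b, simplified])
          finally show ?thesis unfolding \<Delta>_def by simp
        qed
        have "\<Delta> u * \<Delta> v \<ge> 0" using np[of u] np[of v] uv by (simp add: mult_nonpos_nonpos)
        then show False using uv by simp
      qed
      have "\<Delta> 0 = 1 - b" unfolding \<Delta>_def using DbD(6)[OF f] DbD(6)[OF g] by simp
      moreover have "\<Delta> D = - b * g (1 / a)" unfolding \<Delta>_def DD using a DbD(7)[OF f] by simp
      moreover have "g (1 / a) > 0" using Db_pos[OF g, of "1 / a"] 2 by simp
      ultimately show ?thesis using b1 b by (simp add: mult_pos_neg)
    next
      case 3
      have DD: "D = 1" unfolding D_def using 3 a by simp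
      have b1: "b > 1"
      proof (rule ccontr)
        assume "\<not> b > 1"
        have np: "\<Delta> y \<ge> 0" if "0 \<le> y" "y \<le> D" for y
        proof -
          have "a * y \<le> y" "0 \<le> a * y" using that 3 a DD by (auto simp: mult_left_le_one_le)
          then have "f y \<le> f (a * y)" using Db_le[OF f, of "a * y" y] that DD by simp
          moreover have "f y = g y" using eq that D1 by simp
          moreover have "b * g y \<le> g y" using \<open>\<not> b > 1\<close> gnn[of y] that D1 by (simp add: mult_right_mono[of b 1, simplified])
          ultimately show ?thesis unfolding \<Delta>_def by simp
        qed
        have "\<Delta> u * \<Delta> v \<ge> 0" using np[of u] np[of v] uv by simp
        then show False using uv by simp
      qed
      have "\<Delta> 0 = 1 - b" unfolding \<Delta>_def using DbD(6)[OF f] DbD(6)[OF g] by simp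
      moreover have "\<Delta> D = f a" unfolding \<Delta>_def DD using DbD(7)[OF g] by simp
      moreover have "f a > 0" using Db_pos[OF f, of a] 3 a by simp
      ultimately show ?thesis using b1 by (simp add: mult_neg_pos)
    qed
  qed
  obtain cL dL cR dR where swL: "(cL, dL) \<in> sign_switches \<Delta> 0 D" and swR: "(cR, dR) \<in> sign_switches \<Delta> 0 D"
    and LR: "dL < cR"
  proof -
    have "(c1, d1) \<noteq> (c2, d2)" using s12 cd1 cd2 by simp
    then have "d1 < c2 \<or> d2 < c1" using switches_ordered[OF sw1 sw2] by simp
    then show ?thesis using that sw1 sw2 by blast
  qed
  obtain \<delta>L where \<delta>L: "\<delta>L > 0" "\<And>x. 0 < x \<and> x \<le> \<delta>L \<Longrightarrow> \<Delta> (cL - x) * \<Delta> (dL + x) < 0"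
    using switchD(5)[OF swL] by auto
  obtain \<delta>R where \<delta>R: "\<delta>R > 0" "\<And>x. 0 < x \<and> x \<le> \<delta>R \<Longrightarrow> \<Delta> (cR - x) * \<Delta> (dR + x) < 0"
    using switchD(5)[OF swR] by auto
  have cL0: "cL > 0" "cL \<le> dL" using switchD[OF swL] by auto
  have dRD: "dR < D" "cR \<le> dR" using switchD[OF swR] by auto
  have c\<phi>: "continuous_on {0..D} (\<lambda>y. f (a * y))"
    by (rule continuous_on_subset[OF cont_scale[OF DbD(1)[OF f] a]]) (use Da in auto)
  have c\<psi>: "continuous_on {0..D} g"
    by (rule continuous_on_subset[OF DbD(1)[OF g]]) (use D1 in auto)
  have v\<phi>: "convex_on {0..D} (\<lambda>y. f (a * y))"
    by (rule convex_on_subset[OF convex_scale[OF DbD(2)[OF f] a]]) (use Da in auto)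
  have v\<psi>: "convex_on {0..D} g"
    by (rule convex_on_subset[OF DbD(2)[OF g]]) (use D1 in auto)
  have c\<Delta>: "continuous_on {0..D} \<Delta>" unfolding \<Delta>_def using c\<phi> c\<psi> by (intro continuous_intros)
  have "\<exists>\<eta>>0. \<forall>y\<in>{0..D}. \<bar>y - 0\<bar> < \<eta> \<longrightarrow> \<Delta> y * \<Delta> 0 > 0"
    by (rule cont_near) (use c\<Delta> D0 ends in \<open>auto intro!: continuous_intros simp: zero_less_mult_iff mult_less_0_iff\<close>)
  then obtain \<eta>0 where \<eta>0: "\<eta>0 > 0" "\<And>y. y \<in> {0..D} \<Longrightarrow> \<bar>y - 0\<bar> < \<eta>0 \<Longrightarrow> \<Delta> y * \<Delta> 0 > 0" by force
  have "\<exists>\<eta>>0. \<forall>y\<in>{0..D}. \<bar>y - D\<bar> < \<eta> \<longrightarrow> \<Delta> y * \<Delta> D > 0"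
    by (rule cont_near) (use c\<Delta> D0 ends in \<open>auto intro!: continuous_intros simp: zero_less_mult_iff mult_less_0_iff\<close>)
  then obtain \<eta>D where \<eta>D: "\<eta>D > 0" "\<And>y. y \<in> {0..D} \<Longrightarrow> \<bar>y - D\<bar> < \<eta>D \<Longrightarrow> \<Delta> y * \<Delta> D > 0" by force
  define x where "x = min (min \<delta>L \<delta>R) (min ((cR - dL) / 3) (min (cL / 2) ((D - dR) / 2)))"
  have x0: "x > 0" unfolding x_def using \<delta>L(1) \<delta>R(1) LR cL0 dRD by auto
  have x1: "x \<le> \<delta>L" "x \<le> \<delta>R" "x \<le> (cR - dL) / 3" "x \<le> cL / 2" "x \<le> (D - dR) / 2"
    unfolding x_def by (meson min.cobounded1 min.cobounded2 order_trans)+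
  note x = x0 x1
  define u1 where "u1 = cL - x"
  define v1 where "v1 = dL + x"
  define u2 where "u2 = cR - x"
  define v2 where "v2 = dR + x"
  define q0 where "q0 = min (\<eta>0 / 2) (u1 / 2)"
  define q5 where "q5 = max (D - \<eta>D / 2) ((v2 + D) / 2)"
  have u1p: "u1 \<ge> cL / 2" unfolding u1_def using x by simp
  have dLD: "dL < D" using switchD(3)[OF swL] .
  have u1pos: "u1 > 0" using u1p cL0 by linarith
  have qa: "q0 \<le> u1 / 2" "q0 \<le> \<eta>0 / 2" unfolding q0_def by simp_all
  have qb: "q0 > 0" unfolding q0_def using u1pos \<eta>0(1) by simp
  have u1D: "u1 < D" unfolding u1_def using x cL0 dLD by linarith
  have q0: "0 < q0" "q0 < u1" "q0 \<le> D" "\<bar>q0 - 0\<bar> < \<eta>0"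
    using qa qb u1pos u1D \<eta>0(1) by auto
  have ord: "u1 < v1" "v1 < u2" "u2 < v2" unfolding u1_def v1_def u2_def v2_def using x cL0 dRD LR
    by auto
  have v2D: "v2 < D" unfolding v2_def using x dRD by auto
  have m1: "(v2 + D) / 2 < D" "D - \<eta>D / 2 < D" using v2D \<eta>D(1) by (simp_all add: field_simps)
  have m2: "q5 \<ge> (v2 + D) / 2" "q5 \<ge> D - \<eta>D / 2" unfolding q5_def by simp_all
  have q5D: "q5 < D" unfolding q5_def using m1 by simp
  have q5: "v2 < q5" "q5 < D" "0 \<le> q5" "\<bar>q5 - D\<bar> < \<eta>D"
    using m2 q5D v2D \<eta>D(1) q0 ord by (auto simp: abs_if)
  have P1: "\<Delta> u1 * \<Delta> v1 < 0" unfolding u1_def v1_def using \<delta>L(2) x by simp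
  have P2: "\<Delta> u2 * \<Delta> v2 < 0" unfolding u2_def v2_def using \<delta>R(2) x by simp
  have P3: "\<Delta> q0 * \<Delta> q5 < 0"
  proof (rule sgn_c)
    show "\<Delta> q0 * \<Delta> 0 > 0" using \<eta>0(2)[of q0] q0 by simp
    show "\<Delta> q5 * \<Delta> D > 0" using \<eta>D(2)[of q5] q5 by simp
    show "\<Delta> 0 * \<Delta> D < 0" by (fact ends)
  qed
  obtain p1 p2 p3 p4 where pp: "q0 \<le> p1" "p1 < p2" "p2 < p3" "p3 < p4" "p4 \<le> q5"
    "\<Delta> p1 * \<Delta> p2 < 0" "\<Delta> p2 * \<Delta> p3 < 0" "\<Delta> p3 * \<Delta> p4 < 0"
    using alt6[OF q0(2) ord q5(1) P1 P2 P3] by blast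
  have "\<exists>b'>0. 3 \<le> num_sign_switches (\<lambda>x. f (a * x) - b' * g x) 0 D"
  proof (rule key_three[where pa = p1 and pb = p2 and pc = p3 and pd = p4 and bz = b, OF c\<phi> c\<psi> v\<phi> v\<psi>])
    show "0 < p1" "p1 < p2" "p2 < p3" "p3 < p4" "p4 < D" using pp q0 q5 by auto
    show "0 < g y" if "p1 \<le> y" "y \<le> p4" for y
    proof -
      have "0 \<le> y" using that pp(1) q0(1) by linarith
      moreover have "y < 1" using that pp q5(2) D1 by linarith
      ultimately show ?thesis using Db_pos[OF g] by blast
    qed
    show "0 < b" by (fact b)
    show "(f (a * p1) - b * g p1) * (f (a * p2) - b * g p2) < 0" using pp(6) unfolding \<Delta>_def .
    show "(f (a * p2) - b * g p2) * (f (a * p3) - b * g p3) < 0" using pp(7) unfolding \<Delta>_def .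
    show "(f (a * p3) - b * g p3) * (f (a * p4) - b * g p4) < 0" using pp(8) unfolding \<Delta>_def .
  qed
  then obtain b' where "b' > 0" "3 \<le> num_sign_switches (\<lambda>x. f (a * x) - b' * g x) 0 (min 1 (1 / a))"
    unfolding D_def by blast
  then have "crossing_number f g \<noteq> 2" using cn_three[OF a] by blast
  then show False using cn by simp
qed

lemma img_div: "(m::real) > 0 \<Longrightarrow> (\<lambda>x. x / m) ` {0..1} = {0..1/m}"
proof
  assume m: "m > 0"
  show "(\<lambda>x. x / m) ` {0..1} \<subseteq> {0..1/m}" using m by (auto simp: divide_right_mono)
  show "{0..1/m} \<subseteq> (\<lambda>x. x / m) ` {0..1}"
  proof
    fix y assume y: "y \<in> {0..1/m}"
    then have "m * y \<in> {0..1}" using m by (auto simp: field_simps)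
    moreover have "y = (m * y) / m" using m by simp
    ultimately show "y \<in> (\<lambda>x. x / m) ` {0..1}" by blast
  qed
qed

lemma stretch_int:
  fixes f :: "real \<Rightarrow> real"
  assumes f: "f \<in> Dbreve" and m: "m > 0"
  shows "((\<lambda>x. f (m * x)) has_integral integral {0..1} f / m) {0..1/m}"
proof -
  have "(f has_integral integral {0..1} f) {0..1}"
    using integrable_continuous_interval[OF DbD(1)[OF f]] by (rule integrable_integral)
  from has_integral_stretch_real[OF this, of m] m
  show ?thesis by (simp add: img_div)
qed

theorem lemma4p3:
  fixes f g :: "real \<Rightarrow> real"
  assumes "f \<in> Dbreve" and "g \<in> Dbreve"
    and "dominated g f"
    and "stride g > 0"
  shows "(\<forall>x\<in>{0..1 / stride f}. f (stride f * x) \<le> g (stride g * x))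
         \<and> stride g * integral {0..1} f < stride f * integral {0..1} g"
proof -
  note f = assms(1) and g = assms(2) and dom = assms(3) and sg0 = assms(4)
  have P1: "\<forall>x\<in>{0..1 / stride f}. f (stride f * x) \<le> g (stride g * x)"
    by (rule part1[OF f g dom sg0])
  define sf where "sf = stride f"
  define sg where "sg = stride g"
  have le: "\<forall>x\<in>{0..1}. g x \<le> f x" using dom unfolding dominated_def by auto
  have cn: "crossing_number f g = 2" using dom unfolding dominated_def by auto
  have sgf: "sg \<le> sf" unfolding sf_def sg_def by (rule stride_mono[OF f g le])
  have sgp: "sg > 0" using sg0 unfolding sg_def .
  have sfp: "sf > 0" using sgf sgp by simp
  have neq: "sg < sf"
  proof (rule ccontr)
    assume "\<not> sg < sf"
    then have eqs: "sg = sf" using sgf by simp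
    have "f y = g y" if y: "y \<in> {0..1}" for y
    proof -
      have "y / sf \<in> {0..1 / stride f}" using y sfp unfolding sf_def by (auto simp: divide_right_mono)
      then have "f (sf * (y / sf)) \<le> g (sg * (y / sf))" using P1 unfolding sf_def sg_def by blast
      then have "f y \<le> g y" using eqs sfp by simp
      then show ?thesis using le y by (simp add: order_antisym)
    qed
    then show False using no_equal[OF f g _ cn] by blast
  qed
  define If where "If = integral {0..1} f"
  define Ig where "Ig = integral {0..1} g"
  define F where "F x = f (sf * x)" for x
  define G where "G x = g (sg * x)" for x
  have hF: "(F has_integral If / sf) {0..1/sf}" unfolding F_def If_def using stretch_int[OF f sfp] .
  have hG: "(G has_integral Ig / sg) {0..1/sg}" unfolding G_def Ig_def using stretch_int[OF g sgp] .
  have u: "1 / sf < 1 / sg" using neq sgp by (simp add: frac_less2)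
  have u0: "0 \<le> 1 / sf" using sfp by simp
  have cG: "continuous_on {0..1/sg} G" unfolding G_def by (rule cont_scale[OF DbD(1)[OF g] sgp])
  have iG: "G integrable_on {a..b}" if "0 \<le> a" "b \<le> 1/sg" for a b
    by (rule integrable_continuous_interval) (rule continuous_on_subset[OF cG], use that in auto)
  have Gnn: "G x \<ge> 0" if "0 \<le> x" "x \<le> 1/sg" for x
    unfolding G_def using DbD(4)[OF g, of "sg * x"] that sgp by (simp add: field_simps)
  have FG: "F x \<le> G x" if "x \<in> {0..1/sf}" for x using P1 that unfolding F_def G_def sf_def sg_def by blast
  have I1: "If / sf \<le> integral {0..1/sf} G"
  proof -
    have "integral {0..1/sf} F \<le> integral {0..1/sf} G"
      using hF iG[of 0 "1/sf"] u FG by (intro integral_le) (auto simp: has_integral_integrable)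
    then show ?thesis using hF by (simp add: integral_unique)
  qed
  define w where "w = (1 / sf + 1 / sg) / 2"
  have w: "1 / sf < w" "w < 1 / sg" unfolding w_def using u by (simp_all add: field_simps)
  have Gw: "G w > 0" unfolding G_def using Db_pos[OF g, of "sg * w"] w u0 sgp
    by (simp add: field_simps)
  have I2a: "(w - 1 / sf) * G w \<le> integral {1/sf..w} G"
  proof -
    have "integral {1/sf..w} (\<lambda>x. G w) \<le> integral {1/sf..w} G"
    proof (rule integral_le)
      show "(\<lambda>x. G w) integrable_on {1/sf..w}" by (intro integrable_continuous_interval continuous_intros)
      show "G integrable_on {1/sf..w}" using iG u0 w by simp
      fix x assume x: "x \<in> {1/sf..w}"
      have "sg * x \<le> sg * w" using x sgp by (simp add: mult_left_mono)
      moreover have "0 \<le> sg * x"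
      proof -
        have "1 / sf \<le> x" using x by simp
        then have "0 \<le> x" using u0 by linarith
        then show ?thesis using sgp by simp
      qed
      moreover have "sg * w \<le> 1" using w sgp by (simp add: field_simps)
      ultimately show "G w \<le> G x" unfolding G_def using Db_le[OF g] by blast
    qed
    moreover have "integral {1/sf..w} (\<lambda>x. G w) = (w - 1 / sf) * G w"
    proof -
      have "1 / sf \<le> w" using w by simp
      then show ?thesis by (simp add: content_real)
    qed
    ultimately show ?thesis by linarith
  qed
  have w0: "0 \<le> w" using w u0 by linarith
  have I2b: "0 \<le> integral {w..1/sg} G"
  proof (rule integral_nonneg)
    show "G integrable_on {w..1/sg}" using iG[of w "1/sg"] w0 by simp
    fix x assume "x \<in> {w..1/sg}"
    then have "w \<le> x" "x \<le> 1/sg" by auto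
    then show "0 \<le> G x" using Gnn[of x] w0 by linarith
  qed
  have I2: "integral {1/sf..1/sg} G > 0"
  proof -
    have "integral {1/sf..w} G + integral {w..1/sg} G = integral {1/sf..1/sg} G"
    proof -
      have int: "G integrable_on {1/sf..1/sg}" using iG[of "1/sf" "1/sg"] u0 by simp
      show ?thesis by (rule Henstock_Kurzweil_Integration.integral_combine[OF less_imp_le[OF w(1)] less_imp_le[OF w(2)] int])
    qed
    moreover have "(w - 1 / sf) * G w > 0" using w Gw by simp
    ultimately show ?thesis using I2a I2b by linarith
  qed
  have I3: "integral {0..1/sf} G + integral {1/sf..1/sg} G = Ig / sg"
  proof -
    have "integral {0..1/sf} G + integral {1/sf..1/sg} G = integral {0..1/sg} G"
    proof -
      have int: "G integrable_on {0..1/sg}" using iG[of 0 "1/sg"] by simp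
      show ?thesis by (rule Henstock_Kurzweil_Integration.integral_combine[OF u0 less_imp_le[OF u] int])
    qed
    then show ?thesis using hG by (simp add: integral_unique)
  qed
  have "If / sf < Ig / sg" using I1 I2 I3 by linarith
  then have "sg * If < sf * Ig" using sfp sgp by (simp add: field_simps)
  then show ?thesis using P1 unfolding If_def Ig_def sf_def sg_def by simp
qed

end
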